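(* Assume $\{f_t\}_t$ is Newton-admissible. Let $I=\{1,\ldots,n_I\}$ with $1\le n_I<n$, $J=\{1,\ldots,n\}$, and $L=\{1,\ldots,k_L\}\subseteq K\subseteq K_0$. Let $(\tau,\mathbf{q})\in S^I(K)\cap\overline{S^J(L)}$, sufficiently close to the origin, and let $\rho(s)=(t(s),\mathbf{z}(s))$ be a real analytic path (in a real variable $s$) with $\rho(0)=(\tau,\mathbf{q})$ and $\rho(s)\in S^J(L)$ for $s\ne0$. Write $z_i(s)=a_is^{w_i}+(\text{higher order terms})$ with $a_i\ne0$, so that $w_i=0$, $a_i=q_i$ for $i\le n_I$ and $w_i>0$ for $i>n_I$; put $\mathbf{w}=(w_1,\ldots,w_n)$ and $w_{\min}:=\min\{w_i: n_I<i\le n\}$. Let $L':=\{k\in L: I\in\mathcal{V}_{f^k_t}\}$, assume $L'=\{1,\ldots,k_{L'}\}$, and assume $d(\mathbf{w};f^k_t)=d$ for all $k\in L'$ and all small $t$ (for some common value $d$). Then, after renumbering $f^1,\ldots,f^{k_{L'}}$ if necessary, there exist polynomials $c_{k,l}(s)$, $1\le l<k\le k_{L'}$, such that, writing $$df^k(\rho(s))+\sum_{l=1}^{k-1}c_{k,l}(s)\,df^l(\rho(s))=\omega_k s^{\nu_k}+(\text{higher order terms in } s),\quad \omega_k\ne0,$$ the covectors $\omega_1,\ldots,\omega_{k_{L'}}\in T^*_{(\tau,\mathbf{q})}(\mathbb{C}\times\mathbb{C}^n)$ are linearly independent and $\nu_1\le\cdots\le\nu_{k_{L'}}\le d-w_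{\min}$.
   Context: Let $(t,\mathbf{z})=(t,z_1,\ldots,z_n)$ be coordinates on $\mathbb{C}\times\mathbb{C}^n$. For $k\in K_0:=\{1,\ldots,k_0\}$ let $f^k\colon\mathbb{C}\times\mathbb{C}^n\to\mathbb{C}$ be a non-constant polynomial with $f^k(t,\mathbf{0})=0$ for all $t$; put $f:=f^1\cdots f^{k_0}$, $f_t(\mathbf{z}):=f(t,\mathbf{z})$, $f^k_t(\mathbf{z}):=f^k(t,\mathbf{z})$. Here $df^k=\frac{\partial f^k}{\partial t}dt+\sum_i\frac{\partial f^k}{\partial z_i}dz_i$, and $df^k(\rho(s))$ is expanded as a (vector-valued) power series in $s$. Newton data: for a polynomial $g(\mathbf{z})=\sum_\alpha c_\alpha\mathbf{z}^\alpha$ with $g(\mathbf{0})=0$, $\Gamma_+(g)$ is the convex hull in $\mathbb{R}^n_+$ of $\bigcup_{c_\alpha\neq0}(\alpha+\mathbb{R}^n_+)$, and the Newton boundary $\Gamma(g)$ is the union of its compact faces. For a weight vector $\mathbf{w}=(w_1,\ldots,w_n)\in\mathbb{N}^n\setminus\{\mathbf{0}\}$ (nonnegative integers), $d(\mathbf{w};g):=\min\{\sum_i w_ix_i : x\in\Gamma_+(g)\}$, $\Delta(\mathbf{w};g)$ is the face of $\Gamma_+(g)$ where this minimum is attained, $g_{\mathbf{w}}:=\sum_{\alpha\in\Delta(\mathbf{w};g)}c_\alpha\mathbf{z}^\alpha$ is the face function, and $I(\mathbf{w}):=\{i: w_i=0\}$. $\mathbf w$ is positive if all $w_i>0$. For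 $I\subseteq\{1,\ldots,n\}$, $\mathbb{C}^I:=\{\mathbf{z}: z_i=0 \text{ for } i\notin I\}$ and $\mathbb{C}^{*I}:=\{\mathbf{z}: z_i=0\iff i\notin I\}$; $\mathbb{C}^{*n}=\mathbb{C}^{*\{1,\ldots,n\}}$. $\mathcal{V}_g$ is the set of $I$ with $g|_{\mathbb{C}^I}\equiv0$. For $i_1,\ldots,i_m$ and $u_{i_j}\in\mathbb{C}^*$, $\mathbb{C}^{*n}(u_{i_1},\ldots,u_{i_m}):=\{\mathbf{z}\in\mathbb{C}^{*n}: z_{i_j}=u_{i_j},\ 1\le j\le m\}$. Non-degenerate complete intersection: polynomials $g^1,\ldots,g^p$ vanishing at $\mathbf 0$ define a non-degenerate complete intersection germ $V(g^1,\ldots,g^p)$ if for every positive weight vector $\mathbf{w}$, the $p$-form $dg^1_{\mathbf{w}}\wedge\cdots\wedge dg^p_{\mathbf{w}}$ is nowhere zero on $V^*(g^1_{\mathbf{w}},\ldots,g^p_{\mathbf{w}}):=\{\mathbf{z}\in\mathbb{C}^{*n}: g^1_{\mathbf{w}}(\mathbf{z})=\cdots=g^p_{\mathbf{w}}(\mathbf{z})=0\}$. Local tameness: $R>0$ is a radius of local tameness of $\{g^1,\ldots,g^p\}$ if for every nonempty $I=\{i_1,\ldots,i_m\}\in\mathcal{V}_{g^1}\cap\cdots\cap\mathcal{V}_{g^p}$, every $\mathbf{w}\in\mathbb{N}^n\setminus\{\mathbf 0\}$ with $I(\mathbf{w})=I$ and every $u_{i_1},\ldots,u_{i_m}\in\mathbb{C}^*$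 with $\sum_j|u_{i_j}|^2<R$, the set $V^*(g^1_{\mathbf{w}},\ldots,g^p_{\mathbf{w}})\cap\mathbb{C}^{*n}(u_{i_1},\ldots,u_{i_m})$ is a reduced non-singular complete intersection in $\mathbb{C}^{*n}(u_{i_1},\ldots,u_{i_m})$, i.e. the differentials of $g^1_{\mathbf{w}},\ldots,g^p_{\mathbf{w}}$ with respect to the variables $(z_i)_{i\notin I}$ are linearly independent at each of its points; the germ is locally tame if such $R$ exists. Newton-admissible: $\{f_t\}_t$ is Newton-admissible if there is $R>0$ such that for all sufficiently small $t$: (i) for each $k\in K_0$, $\Gamma(f^k_t)$ is independent of $t$; (ii) for every nonempty $\{k_1,\ldots,k_p\}\subseteq K_0$, $V(f^{k_1}_t,\ldots,f^{k_p}_t)$ is a non-degenerate, locally tame complete intersection germ having a radius of local tameness greater than $R$ ($R$ independent of $t$ and of the subset). Canonical toric stratification: $\mathcal{S}$ is the collection of nonempty sets $S^I(K):=\{(t,\mathbf{z})\in\mathbb{C}\times\mathbb{C}^{*I}: f^k(t,\mathbf{z})=0\iff k\in K\}$ for $I\subseteq\{1,\ldots,n\}$, $K\subseteq K_0$ (near the origin these are non-singular, and $S^{\emptyset}(K_0)=\mathbb{C}\times\{\mathbf 0\}$); $\overline{S}$ denotes closure. *)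

theory Defs
  imports "HOL-Analysis.Analysis" "HOL-Computational_Algebra.Polynomial"
begin

text \<open>A polynomial in the variables x_0 = t, x_1 = z_1, ..., x_n = z_n with complex
  coefficients is represented by its coefficient function on exponent vectors
  alpha :: nat => nat (alpha 0 = exponent of t, alpha i = exponent of z_i).\<close>
type_synonym cpoly = "(nat \<Rightarrow> nat) \<Rightarrow> complex"

definition supp :: "cpoly \<Rightarrow> (nat \<Rightarrow> nat) set" where
  "supp c = {\<alpha>. c \<alpha> \<noteq> 0}"

definition is_poly :: "nat \<Rightarrow> cpoly \<Rightarrow> bool" where
  "is_poly n c \<longleftrightarrow> finite (supp c) \<and> (\<forall>\<alpha>\<in>supp c. \<forall>j>n. \<alpha> j = 0)"

definition peval :: "nat \<Rightarrow> cpoly \<Rightarrow> (nat \<Rightarrow> complex) \<Rightarrow> complex" where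
  "peval n c x = (\<Sum>\<alpha>\<in>supp c. c \<alpha> * (\<Prod>j\<in>{0..n}. x j ^ \<alpha> j))"

definition pderivv :: "nat \<Rightarrow> cpoly \<Rightarrow> cpoly" where
  "pderivv j c = (\<lambda>\<alpha>. of_nat (\<alpha> j + 1) * c (\<alpha>(j := \<alpha> j + 1)))"

text \<open>f_t: the polynomial in z obtained by fixing t (exponent vectors with alpha 0 = 0).\<close>
definition slice :: "cpoly \<Rightarrow> complex \<Rightarrow> cpoly" where
  "slice c t = (\<lambda>\<beta>. if \<beta> 0 = 0
      then (\<Sum>\<alpha>\<in>{\<alpha>. c \<alpha> \<noteq> 0 \<and> \<alpha>(0 := 0) = \<beta>}. c \<alpha> * t ^ \<alpha> 0) else 0)"

definition wdot :: "nat \<Rightarrow> (nat \<Rightarrow> real) \<Rightarrow> (nat \<Rightarrow> real) \<Rightarrow> real" where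
  "wdot n w x = (\<Sum>i\<in>{1..n}. w i * x i)"

text \<open>Gamma_+(g) in R^n_+ (points are nat => real vanishing outside 1..n):
  convex hull of the union of alpha + R^n_+ over the support, i.e. conv(supp) + R^n_+.\<close>
definition newton_plus :: "nat \<Rightarrow> cpoly \<Rightarrow> (nat \<Rightarrow> real) set" where
  "newton_plus n g = {x. (\<forall>i. i \<notin> {1..n} \<longrightarrow> x i = 0) \<and>
     (\<exists>\<mu>::(nat \<Rightarrow> nat) \<Rightarrow> real. (\<forall>\<alpha>\<in>supp g. \<mu> \<alpha> \<ge> 0) \<and> sum \<mu> (supp g) = 1 \<and>
        (\<forall>i\<in>{1..n}. x i \<ge> (\<Sum>\<alpha>\<in>supp g. \<mu> \<alpha> * real (\<alpha> i))))}"

text \<open>Newton boundary: union of the compact faces of Gamma_+, i.e. the faces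
  cut out by strictly positive (real) weight vectors.\<close>
definition newton_boundary :: "nat \<Rightarrow> cpoly \<Rightarrow> (nat \<Rightarrow> real) set" where
  "newton_boundary n g = \<Union>{{x \<in> newton_plus n g. \<forall>y\<in>newton_plus n g. wdot n w x \<le> wdot n w y}
        | w. \<forall>i\<in>{1..n}. w i > 0}"

definition rvec :: "nat \<Rightarrow> (nat \<Rightarrow> nat) \<Rightarrow> (nat \<Rightarrow> real)" where
  "rvec n \<alpha> = (\<lambda>i. if i \<in> {1..n} then real (\<alpha> i) else 0)"

definition dW :: "nat \<Rightarrow> (nat \<Rightarrow> nat) \<Rightarrow> cpoly \<Rightarrow> real" where
  "dW n w g = Inf {wdot n (\<lambda>i. real (w i)) x | x. x \<in> newton_plus n g}"

definition Delta :: "nat \<Rightarrow> (nat \<Rightarrow> nat) \<Rightarrow> cpoly \<Rightarrow> (nat \<Rightarrow> real) set" where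
  "Delta n w g = {x \<in> newton_plus n g. wdot n (\<lambda>i. real (w i)) x = dW n w g}"

definition facef :: "nat \<Rightarrow> (nat \<Rightarrow> nat) \<Rightarrow> cpoly \<Rightarrow> cpoly" where
  "facef n w g = (\<lambda>\<alpha>. if rvec n \<alpha> \<in> Delta n w g then g \<alpha> else 0)"

definition Cstar :: "nat set \<Rightarrow> (nat \<Rightarrow> complex) set" where
  "Cstar I = {z. \<forall>i. z i = 0 \<longleftrightarrow> i \<notin> I}"

definition Vset :: "nat \<Rightarrow> cpoly \<Rightarrow> nat set set" where
  "Vset n g = {I. I \<subseteq> {1..n} \<and> (\<forall>z. (\<forall>i. i \<notin> I \<longrightarrow> z i = 0) \<longrightarrow> peval n g z = 0)}"

definition cindep :: "nat set \<Rightarrow> nat set \<Rightarrow> (nat \<Rightarrow> nat \<Rightarrow> complex) \<Rightarrow> bool" where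
  "cindep P A v \<longleftrightarrow> (\<forall>a::nat \<Rightarrow> complex.
      (\<forall>i\<in>A. (\<Sum>k\<in>P. a k * v k i) = 0) \<longrightarrow> (\<forall>k\<in>P. a k = 0))"

definition nondeg :: "nat \<Rightarrow> nat set \<Rightarrow> (nat \<Rightarrow> cpoly) \<Rightarrow> bool" where
  "nondeg n P g \<longleftrightarrow> (\<forall>w::nat \<Rightarrow> nat. (\<forall>i\<in>{1..n}. w i > 0) \<longrightarrow>
     (\<forall>z\<in>Cstar {1..n}. (\<forall>k\<in>P. peval n (facef n w (g k)) z = 0) \<longrightarrow>
        cindep P {1..n} (\<lambda>k i. peval n (pderivv i (facef n w (g k))) z)))"

definition tame_radius :: "nat \<Rightarrow> nat set \<Rightarrow> (nat \<Rightarrow> cpoly) \<Rightarrow> real \<Rightarrow> bool" where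
  "tame_radius n P g R \<longleftrightarrow> R > 0 \<and> (\<forall>I. I \<noteq> {} \<longrightarrow> (\<forall>k\<in>P. I \<in> Vset n (g k)) \<longrightarrow>
     (\<forall>w::nat \<Rightarrow> nat. (\<exists>i\<in>{1..n}. w i \<noteq> 0) \<longrightarrow> {i\<in>{1..n}. w i = 0} = I \<longrightarrow>
       (\<forall>u::nat \<Rightarrow> complex. (\<forall>i\<in>I. u i \<noteq> 0) \<longrightarrow> (\<Sum>i\<in>I. (cmod (u i))\<^sup>2) < R \<longrightarrow>
         (\<forall>z\<in>Cstar {1..n}. (\<forall>i\<in>I. z i = u i) \<longrightarrow> (\<forall>k\<in>P. peval n (facef n w (g k)) z = 0) \<longrightarrow>
            cindep P ({1..n} - I) (\<lambda>k i. peval n (pderivv i (facef n w (g k))) z)))))"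

definition newton_admissible :: "nat \<Rightarrow> nat \<Rightarrow> (nat \<Rightarrow> cpoly) \<Rightarrow> bool" where
  "newton_admissible n k0 f \<longleftrightarrow> (\<exists>R>0. \<exists>\<epsilon>>0. \<forall>t t'. cmod t < \<epsilon> \<longrightarrow> cmod t' < \<epsilon> \<longrightarrow>
     (\<forall>k\<in>{1..k0}. newton_boundary n (slice (f k) t) = newton_boundary n (slice (f k) t')) \<and>
     (\<forall>P. P \<noteq> {} \<longrightarrow> P \<subseteq> {1..k0} \<longrightarrow>
        nondeg n P (\<lambda>k. slice (f k) t) \<and> (\<exists>R'>R. tame_radius n P (\<lambda>k. slice (f k) t) R')))"

definition stratum :: "nat \<Rightarrow> nat \<Rightarrow> (nat \<Rightarrow> cpoly) \<Rightarrow> nat set \<Rightarrow> nat set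
     \<Rightarrow> (complex \<times> (nat \<Rightarrow> complex)) set" where
  "stratum n k0 f I K = {(t, z). z \<in> Cstar I \<and>
      (\<forall>k\<in>{1..k0}. peval n (f k) (z(0 := t)) = 0 \<longleftrightarrow> k \<in> K)}"

definition has_ps :: "real \<Rightarrow> (nat \<Rightarrow> complex) \<Rightarrow> (real \<Rightarrow> complex) \<Rightarrow> bool" where
  "has_ps \<epsilon> a g \<longleftrightarrow> (\<forall>s. \<bar>s\<bar> < \<epsilon> \<longrightarrow> (\<lambda>m. a m * (complex_of_real s) ^ m) sums g s)"

end

theory Submission
  imports Defs "HOL-Computational_Algebra.Polynomial_FPS"
begin


lemma hp_mult_aux:
  fixes a b :: "nat \<Rightarrow> complex"
  assumes "has_ps \<epsilon> a g" "has_ps \<epsilon> b h" "\<bar>s\<bar> < \<epsilon>"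
  shows "(\<lambda>m. (\<Sum>i=0..m. a i * b (m - i)) * (complex_of_real s) ^ m) sums (g s * h s)"
proof -
  define r where "r = (\<bar>s\<bar> + \<epsilon>) / 2"
  have r1: "\<bar>s\<bar> < r" "r < \<epsilon>" using assms(3) by (auto simp: r_def)
  have "\<bar>r\<bar> < \<epsilon>" using r1 by auto
  hence sa: "summable (\<lambda>m. a m * (complex_of_real r) ^ m)" and sb: "summable (\<lambda>m. b m * (complex_of_real r) ^ m)"
    using assms unfolding has_ps_def sums_iff by auto
  have nz: "norm (complex_of_real s) < norm (complex_of_real r)" using r1 by auto
  have na: "summable (\<lambda>m. norm (a m * (complex_of_real s) ^ m))" by (rule powser_insidea[OF sa nz])
  have nb: "summable (\<lambda>m. norm (b m * (complex_of_real s) ^ m))" by (rule powser_insidea[OF sb nz])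
  have ga: "(\<lambda>m. a m * (complex_of_real s) ^ m) sums g s" and gb: "(\<lambda>m. b m * (complex_of_real s) ^ m) sums h s"
    using assms unfolding has_ps_def by auto
  have C: "(\<lambda>k. \<Sum>i\<le>k. (a i * (complex_of_real s) ^ i) * (b (k - i) * (complex_of_real s) ^ (k - i))) sums
     ((\<Sum>m. a m * (complex_of_real s) ^ m) * (\<Sum>m. b m * (complex_of_real s) ^ m))"
    by (rule Cauchy_product_sums[OF na nb])
  have e: "(\<Sum>i\<le>k. (a i * (complex_of_real s) ^ i) * (b (k - i) * (complex_of_real s) ^ (k - i)))
      = (\<Sum>i=0..k. a i * b (k - i)) * (complex_of_real s) ^ k" for k
  proof -
    have "(\<Sum>i\<le>k. (a i * (complex_of_real s) ^ i) * (b (k - i) * (complex_of_real s) ^ (k - i)))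
       = (\<Sum>i=0..k. (a i * b (k - i)) * (complex_of_real s) ^ k)"
      unfolding atMost_atLeast0
      by (rule sum.cong) (auto simp: power_add[symmetric] mult_ac)
    thus ?thesis by (simp add: sum_distrib_right)
  qed
  show ?thesis using C unfolding e sums_unique[OF ga, symmetric] sums_unique[OF gb, symmetric] .
qed

lemma hp_mult:
  assumes "has_ps \<epsilon> (fps_nth F) g" "has_ps \<epsilon> (fps_nth G) h"
  shows "has_ps \<epsilon> (fps_nth (F * G)) (\<lambda>s. g s * h s)"
  using hp_mult_aux[OF assms] unfolding has_ps_def fps_mult_nth by simp

lemma hp_add:
  assumes "has_ps \<epsilon> (fps_nth F) g" "has_ps \<epsilon> (fps_nth G) h"
  shows "has_ps \<epsilon> (fps_nth (F + G)) (\<lambda>s. g s + h s)"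
  using assms unfolding has_ps_def by (auto simp: distrib_right intro: sums_add)

lemma hp_const: "has_ps \<epsilon> (fps_nth (fps_const c)) (\<lambda>s. c)"
proof -
  have "(\<lambda>m. fps_nth (fps_const c) m * (complex_of_real s) ^ m) = (\<lambda>m. if m = 0 then c else 0)" for s
    by (auto simp: fun_eq_iff)
  thus ?thesis unfolding has_ps_def using sums_single[of 0 "\<lambda>_. c"] by simp
qed

lemma hp_zero: "has_ps \<epsilon> (fps_nth 0) (\<lambda>s. 0)"
  by (metis hp_const fps_const_0_eq_0)

lemma hp_one: "has_ps \<epsilon> (fps_nth 1) (\<lambda>s. 1)"
  by (metis hp_const fps_const_1_eq_1)

lemma hp_sum:
  assumes "finite S" "\<And>x. x \<in> S \<Longrightarrow> has_ps \<epsilon> (fps_nth (F x)) (g x)"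
  shows "has_ps \<epsilon> (fps_nth (\<Sum>x\<in>S. F x)) (\<lambda>s. \<Sum>x\<in>S. g x s)"
  using assms by (induction S rule: finite_induct) (auto intro: hp_add hp_zero)

lemma hp_prod:
  assumes "finite S" "\<And>x. x \<in> S \<Longrightarrow> has_ps \<epsilon> (fps_nth (F x)) (g x)"
  shows "has_ps \<epsilon> (fps_nth (\<Prod>x\<in>S. F x)) (\<lambda>s. \<Prod>x\<in>S. g x s)"
  using assms by (induction S rule: finite_induct) (auto intro: hp_mult hp_one)

lemma hp_power:
  assumes "has_ps \<epsilon> (fps_nth F) g"
  shows "has_ps \<epsilon> (fps_nth (F ^ k)) (\<lambda>s. g s ^ k)"
proof (induction k)
  case 0 show ?case unfolding power_0 by (rule hp_one)
next
  case (Suc k) show ?case unfolding power_Suc by (rule hp_mult[OF assms Suc])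
qed

lemma hp_poly: "has_ps \<epsilon> (fps_nth (fps_of_poly p)) (\<lambda>s. poly p (complex_of_real s))"
proof -
  have "(\<lambda>m. coeff p m * (complex_of_real s) ^ m) sums poly p (complex_of_real s)" for s
  proof -
    have "(\<lambda>m. coeff p m * (complex_of_real s) ^ m) sums (\<Sum>m<Suc (degree p). coeff p m * (complex_of_real s) ^ m)"
      by (rule sums_finite) (auto simp: coeff_eq_0)
    thus ?thesis by (simp add: poly_altdef atLeast0AtMost lessThan_Suc_atMost)
  qed
  thus ?thesis unfolding has_ps_def by simp
qed

lemma hp_unique_zero:
  assumes "has_ps \<epsilon> a g" "\<epsilon> > 0" "\<And>s. \<bar>s\<bar> < \<epsilon> \<Longrightarrow> g s = 0"
  shows "a = (\<lambda>_. 0)"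
proof -
  define A where "A = (\<lambda>z::complex. \<Sum>m. a m * z ^ m)"
  have "\<bar>\<epsilon>/2\<bar> < \<epsilon>" using assms(2) by auto
  hence sr: "summable (\<lambda>m. a m * (complex_of_real (\<epsilon>/2)) ^ m)"
    using assms(1) unfolding has_ps_def sums_iff by blast
  have A0: "A (complex_of_real s) = 0" if "\<bar>s\<bar> < \<epsilon>" for s
    using assms that unfolding has_ps_def A_def by (metis sums_unique)
  show ?thesis
  proof (rule ccontr)
    assume "a \<noteq> (\<lambda>_. 0)"
    then obtain k where k: "a k \<noteq> 0" by auto
    define p where "p = (LEAST k. a k \<noteq> 0)"
    have ap: "a p \<noteq> 0" using k unfolding p_def by (rule LeastI)
    have bel: "a m = 0" if "m < p" for m using that not_less_Least unfolding p_def by blast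
    define b where "b = (\<lambda>m. a (m + p))"
    have sb: "summable (\<lambda>m. b m * (complex_of_real (\<epsilon>/2)) ^ m)"
    proof -
      have "summable (\<lambda>m. a (m + p) * (complex_of_real (\<epsilon>/2)) ^ (m + p))"
        using sr summable_iff_shift[of "\<lambda>m. a m * (complex_of_real (\<epsilon>/2)) ^ m" p] by simp
      hence "summable (\<lambda>m. (a (m + p) * (complex_of_real (\<epsilon>/2)) ^ m) * (complex_of_real (\<epsilon>/2)) ^ p)"
        by (simp add: power_add mult_ac)
      hence "summable (\<lambda>m. (a (m + p) * (complex_of_real (\<epsilon>/2)) ^ m) * (complex_of_real (\<epsilon>/2)) ^ p / (complex_of_real (\<epsilon>/2)) ^ p)"
        by (rule summable_divide)
      thus ?thesis using assms(2) unfolding b_def by simp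
    qed
    define B where "B = (\<lambda>z::complex. \<Sum>m. b m * z ^ m)"
    have cont: "isCont B 0" unfolding B_def
      by (rule isCont_powser[OF sb]) (use assms(2) in simp)
    have B0: "B 0 = a p" unfolding B_def b_def
      using powser_zero[of b] by (simp add: b_def)
    have Bs: "B (complex_of_real s) = 0" if "0 < \<bar>s\<bar>" "\<bar>s\<bar> < \<epsilon>/2" for s
    proof -
      have ns: "norm (complex_of_real s) < norm (complex_of_real (\<epsilon>/2))" using that by auto
      have sbs: "summable (\<lambda>m. b m * (complex_of_real s) ^ m)"
        by (rule summable_norm_cancel[OF powser_insidea[OF sb ns]])
      have "(\<lambda>m. b m * (complex_of_real s) ^ m) sums B (complex_of_real s)"
        using sbs unfolding B_def by (simp add: summable_sums)
      hence "(\<lambda>m. (b m * (complex_of_real s) ^ m) * (complex_of_real s) ^ p) sums (B (complex_of_real s) * (complex_of_real s) ^ p)"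
        by (rule sums_mult2)
      hence "(\<lambda>m. a (m + p) * (complex_of_real s) ^ (m + p)) sums (B (complex_of_real s) * (complex_of_real s) ^ p)"
        by (simp add: b_def power_add mult_ac)
      hence "(\<lambda>m. a m * (complex_of_real s) ^ m) sums (B (complex_of_real s) * (complex_of_real s) ^ p + (\<Sum>m<p. a m * (complex_of_real s) ^ m))"
        using sums_iff_shift[of "\<lambda>m. a m * (complex_of_real s) ^ m" p] by simp
      hence "(\<lambda>m. a m * (complex_of_real s) ^ m) sums (B (complex_of_real s) * (complex_of_real s) ^ p)"
        using bel by simp
      moreover have "(\<lambda>m. a m * (complex_of_real s) ^ m) sums 0"
      proof -
        have "\<bar>s\<bar> < \<epsilon>" using that by auto
        thus ?thesis using assms(1) assms(3)[of s] unfolding has_ps_def by auto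
      qed
      ultimately have "B (complex_of_real s) * (complex_of_real s) ^ p = 0" using sums_unique2 by blast
      thus ?thesis using that by auto
    qed
    define x where "x = (\<lambda>n. \<epsilon> / 4 * inverse (real (Suc n)))"
    have xl: "x \<longlonglongrightarrow> 0" unfolding x_def
      by (rule tendsto_mult_right_zero[OF LIMSEQ_inverse_real_of_nat])
    have "(\<lambda>n. B (complex_of_real (x n))) \<longlonglongrightarrow> B (complex_of_real 0)"
      by (rule isCont_tendsto_compose[OF _ tendsto_of_real[OF xl]]) (simp add: cont)
    moreover have "B (complex_of_real (x n)) = 0" for n
    proof (rule Bs)
      have "0 < x n" using assms(2) by (simp add: x_def)
      moreover have "x n \<le> \<epsilon> / 4" using assms(2) unfolding x_def
        by (simp add: field_simps)
      ultimately show "0 < \<bar>x n\<bar>" "\<bar>x n\<bar> < \<epsilon> / 2" using assms(2) by auto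
    qed
    ultimately have "B 0 = 0" using LIMSEQ_unique[of "\<lambda>n. 0"] by auto
    thus False using B0 ap by simp
  qed
qed



definition mw :: "nat \<Rightarrow> (nat \<Rightarrow> real) \<Rightarrow> cpoly \<Rightarrow> real" where
  "mw n w g = Min ((\<lambda>\<beta>. wdot n w (rvec n \<beta>)) ` supp g)"

lemma rvec_nonneg: "rvec n \<beta> i \<ge> 0" by (simp add: rvec_def)

lemma L1:
  assumes fin: "finite (supp g)" and w: "\<forall>i\<in>{1..n}. w i \<ge> 0" and x: "x \<in> newton_plus n g"
  shows "supp g \<noteq> {}" "wdot n w x \<ge> mw n w g"
proof -
  obtain \<mu> where mu: "\<forall>\<alpha>\<in>supp g. \<mu> \<alpha> \<ge> 0" "sum \<mu> (supp g) = 1"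
     "\<forall>i\<in>{1..n}. x i \<ge> (\<Sum>\<alpha>\<in>supp g. \<mu> \<alpha> * real (\<alpha> i))"
    using x unfolding newton_plus_def by blast
  show ne: "supp g \<noteq> {}" using mu(2) by auto
  let ?m = "mw n w g"
  have "(\<Sum>\<alpha>\<in>supp g. \<mu> \<alpha> * ?m) \<le> (\<Sum>\<alpha>\<in>supp g. \<mu> \<alpha> * wdot n w (rvec n \<alpha>))"
    by (rule sum_mono) (use mu(1) fin in \<open>auto intro!: mult_left_mono simp: mw_def\<close>)
  also have "\<dots> = (\<Sum>i\<in>{1..n}. w i * (\<Sum>\<alpha>\<in>supp g. \<mu> \<alpha> * real (\<alpha> i)))"
    unfolding wdot_def rvec_def sum_distrib_left
    by (subst sum.swap) (auto intro!: sum.cong simp: mult_ac)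
  also have "\<dots> \<le> wdot n w x"
    unfolding wdot_def by (rule sum_mono) (use w mu(3) in \<open>auto intro: mult_left_mono\<close>)
  finally show "wdot n w x \<ge> ?m" using mu(2) by (simp add: sum_distrib_right[symmetric])
qed

lemma L2:
  assumes fin: "finite (supp g)" and b: "\<beta> \<in> supp g"
  shows "rvec n \<beta> \<in> newton_plus n g"
  unfolding newton_plus_def
proof (intro CollectI conjI exI[of _ "\<lambda>\<alpha>. if \<alpha> = \<beta> then 1 else 0"])
  show "\<forall>i. i \<notin> {1..n} \<longrightarrow> rvec n \<beta> i = 0" by (simp add: rvec_def)
  show "\<forall>\<alpha>\<in>supp g. 0 \<le> (if \<alpha> = \<beta> then 1 else (0::real))" by auto
  show "(\<Sum>\<alpha>\<in>supp g. if \<alpha> = \<beta> then 1 else (0::real)) = 1" using fin b by simp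
  show "\<forall>i\<in>{1..n}. (\<Sum>\<alpha>\<in>supp g. (if \<alpha> = \<beta> then 1 else 0) * real (\<alpha> i)) \<le> rvec n \<beta> i"
  proof
    fix i assume "i \<in> {1..n}"
    have "(\<Sum>\<alpha>\<in>supp g. (if \<alpha> = \<beta> then 1 else 0) * real (\<alpha> i)) = (\<Sum>\<alpha>\<in>supp g. (if \<alpha> = \<beta> then real (\<alpha> i) else 0))"
      by (rule sum.cong) auto
    also have "\<dots> = real (\<beta> i)" using fin b by simp
    finally show "(\<Sum>\<alpha>\<in>supp g. (if \<alpha> = \<beta> then 1 else 0) * real (\<alpha> i)) \<le> rvec n \<beta> i"
      using \<open>i \<in> {1..n}\<close> by (simp add: rvec_def)
  qed
qed

lemma mw_attained:
  assumes "finite (supp g)" "supp g \<noteq> {}"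
  obtains \<beta> where "\<beta> \<in> supp g" "mw n w g = wdot n w (rvec n \<beta>)"
proof -
  have "mw n w g \<in> (\<lambda>\<beta>. wdot n w (rvec n \<beta>)) ` supp g"
    unfolding mw_def by (rule Min_in) (use assms in auto)
  thus ?thesis using that by blast
qed

lemma mw_le:
  assumes "finite (supp g)" "\<beta> \<in> supp g"
  shows "mw n w g \<le> wdot n w (rvec n \<beta>)"
  using assms unfolding mw_def by auto

lemma L3:
  assumes fin: "finite (supp g)" and ne: "supp g \<noteq> {}" and w: "\<forall>i\<in>{1..n}. w i \<ge> 0"
  shows "Inf {wdot n w x | x. x \<in> newton_plus n g} = mw n w g"
proof -
  obtain \<beta> where b: "\<beta> \<in> supp g" "mw n w g = wdot n w (rvec n \<beta>)" using mw_attained[OF fin ne] by metis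
  show ?thesis
  proof (rule cInf_eq_minimum)
    show "mw n w g \<in> {wdot n w x | x. x \<in> newton_plus n g}" using b L2[OF fin b(1)] by auto
    show "\<And>y. y \<in> {wdot n w x | x. x \<in> newton_plus n g} \<Longrightarrow> mw n w g \<le> y"
      using L1[OF fin w] by auto
  qed
qed

lemma dW_mw:
  assumes "finite (supp g)" "supp g \<noteq> {}"
  shows "dW n w g = mw n (\<lambda>i. real (w i)) g"
  unfolding dW_def by (rule L3) (use assms in auto)

lemma L4:
  assumes fg: "finite (supp g)" "supp g \<noteq> {}" and fh: "finite (supp h)" "supp h \<noteq> {}"
    and eq: "newton_boundary n g = newton_boundary n h"
    and w: "\<forall>i\<in>{1..n}. w i > 0"
  shows "mw n w g \<le> mw n w h"
proof -
  have w0: "\<forall>i\<in>{1..n}. w i \<ge> 0" using w by auto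
  obtain \<beta> where b: "\<beta> \<in> supp h" "mw n w h = wdot n w (rvec n \<beta>)" using mw_attained[OF fh] by metis
  have mem: "rvec n \<beta> \<in> {x \<in> newton_plus n h. \<forall>y\<in>newton_plus n h. wdot n w x \<le> wdot n w y}"
    using L2[OF fh(1) b(1)] L1(2)[OF fh(1) w0] b(2) by auto
  have "rvec n \<beta> \<in> newton_boundary n h"
    unfolding newton_boundary_def
    by (rule UnionI[OF _ mem]) (use w in blast)
  hence "rvec n \<beta> \<in> newton_boundary n g" using eq by simp
  hence "rvec n \<beta> \<in> newton_plus n g" unfolding newton_boundary_def by blast
  from L1(2)[OF fg(1) w0 this] b(2) show ?thesis by simp
qed

lemma L5:
  assumes fg: "finite (supp g)" "supp g \<noteq> {}" and fh: "finite (supp h)" "supp h \<noteq> {}"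
    and eq: "newton_boundary n g = newton_boundary n h"
    and w: "\<forall>i\<in>{1..n}. w i \<ge> 0"
  shows "mw n w g \<le> mw n w h"
proof -
  obtain \<beta> where b: "\<beta> \<in> supp h" "mw n w h = wdot n w (rvec n \<beta>)" using mw_attained[OF fh] by metis
  define C where "C = (\<Sum>i\<in>{1..n}. rvec n \<beta> i)"
  have C0: "C \<ge> 0" unfolding C_def by (rule sum_nonneg) (simp add: rvec_nonneg)
  have "mw n w g \<le> mw n w h + e" if e: "e > 0" for e
  proof -
    define w' where "w' = (\<lambda>i. w i + e / (C + 1))"
    have pos: "e / (C + 1) > 0" using e C0 by auto
    have w': "\<forall>i\<in>{1..n}. w' i > 0" using w pos unfolding w'_def by (auto intro: add_nonneg_pos)
    have "mw n w g \<le> mw n w' g"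
    proof -
      obtain \<gamma> where c: "\<gamma> \<in> supp g" "mw n w' g = wdot n w' (rvec n \<gamma>)" using mw_attained[OF fg] by metis
      have "mw n w g \<le> wdot n w (rvec n \<gamma>)" by (rule mw_le[OF fg(1) c(1)])
      also have "\<dots> \<le> wdot n w' (rvec n \<gamma>)" unfolding wdot_def w'_def
        by (rule sum_mono) (use pos in \<open>auto intro!: mult_right_mono simp: rvec_nonneg\<close>)
      finally show ?thesis using c(2) by simp
    qed
    also have "\<dots> \<le> mw n w' h" by (rule L4[OF fg fh eq w'])
    also have "\<dots> \<le> wdot n w' (rvec n \<beta>)" by (rule mw_le[OF fh(1) b(1)])
    also have "\<dots> = wdot n w (rvec n \<beta>) + e / (C + 1) * C"
      unfolding wdot_def w'_def C_def by (simp add: distrib_right sum.distrib sum_distrib_left)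
    also have "\<dots> \<le> mw n w h + e"
    proof -
      have "e / (C + 1) * C \<le> e" using e C0 by (simp add: field_simps)
      thus ?thesis using b(2) by simp
    qed
    finally show ?thesis .
  qed
  thus ?thesis by (rule field_le_epsilon)
qed

lemma mw_eq:
  assumes "finite (supp g)" "supp g \<noteq> {}" "finite (supp h)" "supp h \<noteq> {}"
    "newton_boundary n g = newton_boundary n h" "\<forall>i\<in>{1..n}. w i \<ge> 0"
  shows "mw n w g = mw n w h"
  using L5[OF assms] L5[OF assms(3,4,1,2) assms(5)[symmetric] assms(6)] by simp



definition Vn :: "nat \<Rightarrow> (nat \<Rightarrow> nat) \<Rightarrow> (nat \<Rightarrow> nat) \<Rightarrow> nat" where
  "Vn n w \<beta> = (\<Sum>j\<in>{1..n}. w j * \<beta> j)"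

lemma wdot_rvec: "wdot n (\<lambda>i. real (w i)) (rvec n \<beta>) = real (Vn n w \<beta>)"
  unfolding wdot_def rvec_def Vn_def by simp

lemma Vn_upd0: "Vn n w (\<alpha>(0 := k)) = Vn n w \<alpha>"
  unfolding Vn_def by (rule sum.cong) auto

lemma Vn_inc:
  assumes "i \<in> {1..n}"
  shows "Vn n w (\<beta>(i := \<beta> i + 1)) = Vn n w \<beta> + w i"
proof -
  have "Vn n w (\<beta>(i := \<beta> i + 1)) = (\<Sum>j\<in>{1..n}. w j * \<beta> j + (if j = i then w i else 0))"
    unfolding Vn_def by (rule sum.cong) auto
  also have "\<dots> = Vn n w \<beta> + w i" using assms unfolding Vn_def by (simp add: sum.distrib)
  finally show ?thesis .
qed

lemma supp_slice_sub: "supp (slice g t) \<subseteq> (\<lambda>\<alpha>. \<alpha>(0 := 0)) ` supp g"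
proof
  fix \<beta> assume "\<beta> \<in> supp (slice g t)"
  hence "slice g t \<beta> \<noteq> 0" by (simp add: supp_def)
  hence "(\<Sum>\<alpha>\<in>{\<alpha>. g \<alpha> \<noteq> 0 \<and> \<alpha>(0 := 0) = \<beta>}. g \<alpha> * t ^ \<alpha> 0) \<noteq> 0"
    unfolding slice_def by (auto split: if_splits)
  hence "{\<alpha>. g \<alpha> \<noteq> 0 \<and> \<alpha>(0 := 0) = \<beta>} \<noteq> {}" by (metis sum.empty)
  then obtain \<alpha> where "g \<alpha> \<noteq> 0" "\<alpha>(0 := 0) = \<beta>" by blast
  thus "\<beta> \<in> (\<lambda>\<alpha>. \<alpha>(0 := 0)) ` supp g" by (auto simp: supp_def)
qed

lemma finite_supp_slice: "finite (supp g) \<Longrightarrow> finite (supp (slice g t))"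
  using supp_slice_sub finite_subset by blast

lemma slice_0: "\<beta> 0 \<noteq> 0 \<Longrightarrow> slice g t \<beta> = 0"
  unfolding slice_def by simp

lemma pderivv_supp:
  "supp (pderivv i g) = (\<lambda>\<alpha>. \<alpha>(i := \<alpha> i + 1)) -` supp g"
  unfolding supp_def pderivv_def using of_nat_neq_0[where 'a=complex] by auto

lemma inj_inc: "inj (\<lambda>\<alpha>::nat\<Rightarrow>nat. \<alpha>(i := \<alpha> i + 1))"
proof (rule injI)
  fix a b :: "nat \<Rightarrow> nat" assume h: "a(i := a i + 1) = b(i := b i + 1)"
  show "a = b"
  proof
    fix j show "a j = b j" using fun_cong[OF h, of j] by (cases "j = i") auto
  qed
qed

lemma finite_supp_pderivv: "finite (supp g) \<Longrightarrow> finite (supp (pderivv i g))"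
  unfolding pderivv_supp by (rule finite_vimageI[OF _ inj_inc])

lemma slice_pderivv:
  assumes fin: "finite (supp g)" and i: "i \<noteq> 0" and b0: "\<beta> 0 = 0"
  shows "slice (pderivv i g) t \<beta> = of_nat (\<beta> i + 1) * slice g t (\<beta>(i := \<beta> i + 1))"
proof -
  let ?inc = "\<lambda>\<alpha>::nat\<Rightarrow>nat. \<alpha>(i := \<alpha> i + 1)"
  let ?dec = "\<lambda>\<alpha>::nat\<Rightarrow>nat. \<alpha>(i := \<alpha> i - 1)"
  have "slice (pderivv i g) t \<beta> = (\<Sum>\<alpha>\<in>{\<alpha>. pderivv i g \<alpha> \<noteq> 0 \<and> \<alpha>(0 := 0) = \<beta>}. pderivv i g \<alpha> * t ^ \<alpha> 0)"
    using b0 by (simp add: slice_def)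
  also have "\<dots> = (\<Sum>\<alpha>\<in>{\<alpha>. pderivv i g \<alpha> \<noteq> 0 \<and> \<alpha>(0 := 0) = \<beta>}. of_nat (\<beta> i + 1) * (g (?inc \<alpha>) * t ^ (?inc \<alpha>) 0))"
  proof (rule sum.cong[OF refl])
    fix \<alpha> assume "\<alpha> \<in> {\<alpha>. pderivv i g \<alpha> \<noteq> 0 \<and> \<alpha>(0 := 0) = \<beta>}"
    hence "\<alpha> i = \<beta> i" using i by auto
    thus "pderivv i g \<alpha> * t ^ \<alpha> 0 = of_nat (\<beta> i + 1) * (g (?inc \<alpha>) * t ^ (?inc \<alpha>) 0)"
      using i by (simp add: pderivv_def)
  qed
  also have "\<dots> = of_nat (\<beta> i + 1) * (\<Sum>\<alpha>\<in>{\<alpha>. pderivv i g \<alpha> \<noteq> 0 \<and> \<alpha>(0 := 0) = \<beta>}. g (?inc \<alpha>) * t ^ (?inc \<alpha>) 0)"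
    by (simp add: sum_distrib_left)
  also have "(\<Sum>\<alpha>\<in>{\<alpha>. pderivv i g \<alpha> \<noteq> 0 \<and> \<alpha>(0 := 0) = \<beta>}. g (?inc \<alpha>) * t ^ (?inc \<alpha>) 0)
      = (\<Sum>\<alpha>'\<in>{\<alpha>. g \<alpha> \<noteq> 0 \<and> \<alpha>(0 := 0) = \<beta>(i := \<beta> i + 1)}. g \<alpha>' * t ^ \<alpha>' 0)"
  proof (rule sum.reindex_bij_witness[of _ ?dec ?inc])
    fix a assume a: "a \<in> {\<alpha>. g \<alpha> \<noteq> 0 \<and> \<alpha>(0 := 0) = \<beta>(i := \<beta> i + 1)}"
    hence "(a(0:=0)) i = (\<beta>(i := \<beta> i + 1)) i" by simp
    hence ai: "a i = \<beta> i + 1" using i by simp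
    show "?inc (?dec a) = a" using ai by auto
    have "(?dec a)(0 := 0) = \<beta>"
    proof
      fix j show "((?dec a)(0 := 0)) j = \<beta> j"
        using fun_cong[OF conjunct2[OF a[simplified]], of j] ai b0 i by (cases "j = i"; cases "j = 0") auto
    qed
    moreover have "pderivv i g (?dec a) \<noteq> 0"
    proof -
      have e: "a(i := Suc (\<beta> i)) = a" using ai by auto
      show ?thesis using a ai of_nat_neq_0[where 'a=complex] by (simp add: pderivv_def e)
    qed
    ultimately show "?dec a \<in> {\<alpha>. pderivv i g \<alpha> \<noteq> 0 \<and> \<alpha>(0 := 0) = \<beta>}" by simp
  next
    fix a assume a: "a \<in> {\<alpha>. pderivv i g \<alpha> \<noteq> 0 \<and> \<alpha>(0 := 0) = \<beta>}"
    show "?dec (?inc a) = a" by auto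
    have "g (?inc a) \<noteq> 0" using a by (auto simp: pderivv_def)
    moreover have "(?inc a)(0 := 0) = \<beta>(i := \<beta> i + 1)"
    proof
      fix j show "((?inc a)(0 := 0)) j = (\<beta>(i := \<beta> i + 1)) j"
        using a fun_cong[of "a(0:=0)" \<beta> j] fun_cong[of "a(0:=0)" \<beta> i] i by (cases "j = i"; cases "j = 0") auto
    qed
    ultimately show "?inc a \<in> {\<alpha>. g \<alpha> \<noteq> 0 \<and> \<alpha>(0 := 0) = \<beta>(i := \<beta> i + 1)}" by simp
    show "g (?inc a) * t ^ (?inc a) 0 = g (?inc a) * t ^ (?inc a) 0" ..
  qed
  also have "\<dots> = slice g t (\<beta>(i := \<beta> i + 1))" using b0 i by (simp add: slice_def)
  finally show ?thesis .
qed



lemma fps_mult_low: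
  fixes F G :: "complex fps"
  assumes F: "\<forall>m<p. fps_nth F m = 0" and G: "\<forall>m<q. fps_nth G m = 0"
  shows "\<forall>m<p+q. fps_nth (F*G) m = 0" "fps_nth (F*G) (p+q) = fps_nth F p * fps_nth G q"
proof -
  show "\<forall>m<p+q. fps_nth (F*G) m = 0"
  proof (intro allI impI)
    fix m assume m: "m < p + q"
    have "fps_nth F i * fps_nth G (m - i) = 0" if "i \<in> {0..m}" for i
      using F G m that by (cases "i < p") auto
    thus "fps_nth (F*G) m = 0" unfolding fps_mult_nth by (intro sum.neutral) auto
  qed
  have "fps_nth (F*G) (p+q) = (\<Sum>i=0..p+q. if i = p then fps_nth F p * fps_nth G q else 0)"
    unfolding fps_mult_nth
  proof (rule sum.cong[OF refl])
    fix i assume i: "i \<in> {0..p+q}"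
    show "fps_nth F i * fps_nth G (p + q - i) = (if i = p then fps_nth F p * fps_nth G q else 0)"
      using F G i by (cases "i < p"; cases "i = p") auto
  qed
  also have "\<dots> = fps_nth F p * fps_nth G q" by simp
  finally show "fps_nth (F*G) (p+q) = fps_nth F p * fps_nth G q" .
qed

lemma fps_power_low:
  fixes F :: "complex fps"
  assumes F: "\<forall>m<p. fps_nth F m = 0"
  shows "(\<forall>m<p*k. fps_nth (F^k) m = 0) \<and> fps_nth (F^k) (p*k) = fps_nth F p ^ k"
proof (induction k)
  case 0 show ?case by simp
next
  case (Suc k)
  have e: "p * Suc k = p + p * k" by simp
  show ?case unfolding power_Suc e using fps_mult_low[OF F conjunct1[OF Suc]] Suc by simp
qed

lemma fps_prod_low:
  fixes X :: "nat \<Rightarrow> complex fps"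
  assumes "finite S" "\<forall>j\<in>S. \<forall>m<v j. fps_nth (X j) m = 0"
  shows "(\<forall>m<(\<Sum>j\<in>S. v j * e j). fps_nth (\<Prod>j\<in>S. X j ^ e j) m = 0) \<and>
         fps_nth (\<Prod>j\<in>S. X j ^ e j) (\<Sum>j\<in>S. v j * e j) = (\<Prod>j\<in>S. fps_nth (X j) (v j) ^ e j)"
  using assms
proof (induction S rule: finite_induct)
  case empty show ?case by simp
next
  case (insert x S)
  have px: "(\<forall>m<v x * e x. fps_nth (X x ^ e x) m = 0) \<and> fps_nth (X x ^ e x) (v x * e x) = fps_nth (X x) (v x) ^ e x"
    using fps_power_low[of "v x" "X x" "e x"] insert.prems by auto
  have IH: "(\<forall>m<(\<Sum>j\<in>S. v j * e j). fps_nth (\<Prod>j\<in>S. X j ^ e j) m = 0) \<and>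
         fps_nth (\<Prod>j\<in>S. X j ^ e j) (\<Sum>j\<in>S. v j * e j) = (\<Prod>j\<in>S. fps_nth (X j) (v j) ^ e j)"
    using insert by auto
  show ?case using insert.hyps fps_mult_low[OF conjunct1[OF px] conjunct1[OF IH]] px IH by simp
qed

definition PS :: "nat \<Rightarrow> (nat \<Rightarrow> complex fps) \<Rightarrow> cpoly \<Rightarrow> complex fps" where
  "PS n X g = (\<Sum>\<alpha>\<in>supp g. fps_const (g \<alpha>) * (\<Prod>j\<in>{0..n}. X j ^ \<alpha> j))"

lemma PS_has_ps:
  assumes fin: "finite (supp g)" and X: "\<forall>j\<in>{0..n}. has_ps \<epsilon> (fps_nth (X j)) (\<lambda>s. x s j)"
  shows "has_ps \<epsilon> (fps_nth (PS n X g)) (\<lambda>s. peval n g (x s))"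
  unfolding PS_def peval_def
  by (intro hp_sum[OF fin] hp_mult hp_const hp_prod hp_power) (use X in auto)

lemma PS_coeff:
  assumes fin: "finite (supp g)" and X: "\<forall>j\<in>{0..n}. \<forall>m<v j. fps_nth (X j) m = 0"
    and L: "\<forall>\<alpha>\<in>supp g. L \<le> (\<Sum>j\<in>{0..n}. v j * \<alpha> j)"
  shows "\<forall>m<L. fps_nth (PS n X g) m = 0"
    "fps_nth (PS n X g) L = (\<Sum>\<alpha>\<in>{\<alpha>\<in>supp g. (\<Sum>j\<in>{0..n}. v j * \<alpha> j) = L}. g \<alpha> * (\<Prod>j\<in>{0..n}. fps_nth (X j) (v j) ^ \<alpha> j))"
proof -
  have pl: "\<And>e. (\<forall>m<(\<Sum>j\<in>{0..n}. v j * e j). fps_nth (\<Prod>j\<in>{0..n}. X j ^ e j) m = 0) \<and>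
         fps_nth (\<Prod>j\<in>{0..n}. X j ^ e j) (\<Sum>j\<in>{0..n}. v j * e j) = (\<Prod>j\<in>{0..n}. fps_nth (X j) (v j) ^ e j)"
    by (rule fps_prod_low) (use X in auto)
  have nth: "fps_nth (PS n X g) m = (\<Sum>\<alpha>\<in>supp g. g \<alpha> * fps_nth (\<Prod>j\<in>{0..n}. X j ^ \<alpha> j) m)" for m
    unfolding PS_def fps_sum_nth by simp
  show "\<forall>m<L. fps_nth (PS n X g) m = 0"
  proof (intro allI impI)
    fix m assume m: "m < L"
    have "fps_nth (\<Prod>j\<in>{0..n}. X j ^ \<alpha> j) m = 0" if "\<alpha> \<in> supp g" for \<alpha>
      using pl[of \<alpha>] L that m by auto
    thus "fps_nth (PS n X g) m = 0" unfolding nth by simp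
  qed
  have "fps_nth (PS n X g) L = (\<Sum>\<alpha>\<in>supp g. if (\<Sum>j\<in>{0..n}. v j * \<alpha> j) = L then g \<alpha> * (\<Prod>j\<in>{0..n}. fps_nth (X j) (v j) ^ \<alpha> j) else 0)"
    unfolding nth
  proof (rule sum.cong[OF refl])
    fix \<alpha> assume a: "\<alpha> \<in> supp g"
    show "g \<alpha> * fps_nth (\<Prod>j\<in>{0..n}. X j ^ \<alpha> j) L = (if (\<Sum>j\<in>{0..n}. v j * \<alpha> j) = L then g \<alpha> * (\<Prod>j\<in>{0..n}. fps_nth (X j) (v j) ^ \<alpha> j) else 0)"
    proof (cases "(\<Sum>j\<in>{0..n}. v j * \<alpha> j) = L")
      case True thus ?thesis using pl[of \<alpha>] by simp
    next
      case False
      hence "L < (\<Sum>j\<in>{0..n}. v j * \<alpha> j)" using L a by force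
      thus ?thesis using pl[of \<alpha>] False by simp
    qed
  qed
  also have "\<dots> = (\<Sum>\<alpha>\<in>{\<alpha>\<in>supp g. (\<Sum>j\<in>{0..n}. v j * \<alpha> j) = L}. g \<alpha> * (\<Prod>j\<in>{0..n}. fps_nth (X j) (v j) ^ \<alpha> j))"
    using fin by (simp add: sum.inter_filter)
  finally show "fps_nth (PS n X g) L = (\<Sum>\<alpha>\<in>{\<alpha>\<in>supp g. (\<Sum>j\<in>{0..n}. v j * \<alpha> j) = L}. g \<alpha> * (\<Prod>j\<in>{0..n}. fps_nth (X j) (v j) ^ \<alpha> j))" .
qed

definition Hp :: "nat \<Rightarrow> (nat \<Rightarrow> nat) \<Rightarrow> complex \<Rightarrow> cpoly \<Rightarrow> nat \<Rightarrow> cpoly" where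
  "Hp n w \<tau> g L = (\<lambda>\<beta>. if \<beta> 0 = 0 \<and> Vn n w \<beta> = L then slice g \<tau> \<beta> else 0)"

lemma set0n: "{0..n} = insert 0 {1..(n::nat)}" by auto

lemma regroup:
  assumes fin: "finite (supp g)" and A0: "A 0 = \<tau>" and Aa: "\<forall>j\<in>{1..n}. A j = a j"
  shows "(\<Sum>\<alpha>\<in>{\<alpha>\<in>supp g. Vn n w \<alpha> = L}. g \<alpha> * (\<Prod>j\<in>{0..n}. A j ^ \<alpha> j)) = peval n (Hp n w \<tau> g L) a"
proof -
  define S where "S = {\<alpha>\<in>supp g. Vn n w \<alpha> = L}"
  define T where "T = (\<lambda>\<alpha>. \<alpha>(0 := 0)) ` S"
  define P where "P = (\<lambda>\<beta>. \<Prod>j\<in>{0..n}. a j ^ \<beta> j)"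
  have fS: "finite S" using fin unfolding S_def by auto
  have fT: "finite T" using fS unfolding T_def by auto
  have suppT: "supp (Hp n w \<tau> g L) \<subseteq> T"
  proof
    fix \<beta> assume "\<beta> \<in> supp (Hp n w \<tau> g L)"
    hence h: "\<beta> 0 = 0" "Vn n w \<beta> = L" "slice g \<tau> \<beta> \<noteq> 0"
      unfolding supp_def Hp_def by (auto split: if_splits)
    then obtain \<alpha> where "\<alpha> \<in> supp g" "\<alpha>(0 := 0) = \<beta>" using supp_slice_sub[of g \<tau>] by (auto simp: supp_def)
    moreover hence "Vn n w \<alpha> = L" using h Vn_upd0[of n w \<alpha> 0] by simp
    ultimately show "\<beta> \<in> T" unfolding T_def S_def by auto
  qed
  have "peval n (Hp n w \<tau> g L) a = (\<Sum>\<beta>\<in>T. Hp n w \<tau> g L \<beta> * P \<beta>)"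
    unfolding peval_def P_def
    by (rule sum.mono_neutral_left[OF fT suppT]) (auto simp: supp_def)
  also have "\<dots> = (\<Sum>\<beta>\<in>T. \<Sum>\<alpha>\<in>{\<alpha>\<in>S. \<alpha>(0 := 0) = \<beta>}. g \<alpha> * \<tau> ^ \<alpha> 0 * P (\<alpha>(0 := 0)))"
  proof (rule sum.cong[OF refl])
    fix \<beta> assume "\<beta> \<in> T"
    then obtain \<alpha>0 where a0: "\<alpha>0 \<in> S" "\<beta> = \<alpha>0(0 := 0)" unfolding T_def by auto
    have b0: "\<beta> 0 = 0" and bV: "Vn n w \<beta> = L" using a0 Vn_upd0[of n w \<alpha>0 0] unfolding S_def by auto
    have set: "{\<alpha>. g \<alpha> \<noteq> 0 \<and> \<alpha>(0 := 0) = \<beta>} = {\<alpha>\<in>S. \<alpha>(0 := 0) = \<beta>}"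
    proof (intro set_eqI iffI)
      fix \<alpha> assume "\<alpha> \<in> {\<alpha>. g \<alpha> \<noteq> 0 \<and> \<alpha>(0 := 0) = \<beta>}"
      thus "\<alpha> \<in> {\<alpha>\<in>S. \<alpha>(0 := 0) = \<beta>}" using bV Vn_upd0[of n w \<alpha> 0] unfolding S_def supp_def by auto
    qed (auto simp: S_def supp_def)
    have "Hp n w \<tau> g L \<beta> * P \<beta> = (\<Sum>\<alpha>\<in>{\<alpha>\<in>S. \<alpha>(0 := 0) = \<beta>}. g \<alpha> * \<tau> ^ \<alpha> 0) * P \<beta>"
      unfolding Hp_def slice_def using b0 bV set by simp
    also have "\<dots> = (\<Sum>\<alpha>\<in>{\<alpha>\<in>S. \<alpha>(0 := 0) = \<beta>}. g \<alpha> * \<tau> ^ \<alpha> 0 * P (\<alpha>(0 := 0)))"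
      by (simp add: sum_distrib_right)
    finally show "Hp n w \<tau> g L \<beta> * P \<beta> = (\<Sum>\<alpha>\<in>{\<alpha>\<in>S. \<alpha>(0 := 0) = \<beta>}. g \<alpha> * \<tau> ^ \<alpha> 0 * P (\<alpha>(0 := 0)))" .
  qed
  also have "\<dots> = (\<Sum>\<alpha>\<in>S. g \<alpha> * \<tau> ^ \<alpha> 0 * P (\<alpha>(0 := 0)))"
    by (rule sum.group[OF fS fT]) (auto simp: T_def)
  also have "\<dots> = (\<Sum>\<alpha>\<in>S. g \<alpha> * (\<Prod>j\<in>{0..n}. A j ^ \<alpha> j))"
  proof (rule sum.cong[OF refl])
    fix \<alpha> assume "\<alpha> \<in> S"
    have "P (\<alpha>(0 := 0)) = (\<Prod>j\<in>{1..n}. a j ^ \<alpha> j)"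
      unfolding P_def set0n by (subst prod.insert) (auto intro!: prod.cong)
    moreover have "(\<Prod>j\<in>{0..n}. A j ^ \<alpha> j) = \<tau> ^ \<alpha> 0 * (\<Prod>j\<in>{1..n}. a j ^ \<alpha> j)"
      unfolding set0n using A0 Aa by (subst prod.insert) (auto intro!: prod.cong)
    ultimately show "g \<alpha> * \<tau> ^ \<alpha> 0 * P (\<alpha>(0 := 0)) = g \<alpha> * (\<Prod>j\<in>{0..n}. A j ^ \<alpha> j)" by simp
  qed
  finally show ?thesis unfolding S_def by simp
qed



definition comb :: "nat \<Rightarrow> (nat \<Rightarrow> nat \<Rightarrow> complex fps) \<Rightarrow> (nat \<Rightarrow> complex poly) \<Rightarrow> nat \<Rightarrow> complex fps" where
  "comb m V C j = (\<Sum>k\<in>{1..m}. fps_of_poly (C k) * V k j)"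

definition Dset :: "nat \<Rightarrow> (nat \<Rightarrow> nat) \<Rightarrow> nat \<Rightarrow> nat \<Rightarrow> (nat \<Rightarrow> complex poly) set" where
  "Dset m \<sigma> r i = {D. D i = 1 \<and> (\<forall>i'\<in>{1..m}. i' \<noteq> i \<and> i' \<notin> \<sigma> ` {1..r} \<longrightarrow> D i' = 0)}"

context
  fixes m :: nat and A :: "nat set" and V :: "nat \<Rightarrow> nat \<Rightarrow> complex fps" and B :: nat
  assumes HB: "\<forall>C. (\<exists>k\<in>{1..m}. coeff (C k) 0 \<noteq> 0) \<longrightarrow> (\<exists>N\<le>B. \<exists>j\<in>A. fps_nth (comb m V C j) N \<noteq> 0)"
begin

definition ordc :: "(nat \<Rightarrow> complex poly) \<Rightarrow> nat" where
  "ordc C = (LEAST N. \<exists>j\<in>A. fps_nth (comb m V C j) N \<noteq> 0)"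

lemma ordc_props:
  assumes "\<exists>k\<in>{1..m}. coeff (C k) 0 \<noteq> 0"
  shows "ordc C \<le> B" "\<exists>j\<in>A. fps_nth (comb m V C j) (ordc C) \<noteq> 0"
    "\<forall>N<ordc C. \<forall>j\<in>A. fps_nth (comb m V C j) N = 0"
proof -
  obtain N where N: "N \<le> B" "\<exists>j\<in>A. fps_nth (comb m V C j) N \<noteq> 0" using HB assms by blast
  show "\<exists>j\<in>A. fps_nth (comb m V C j) (ordc C) \<noteq> 0" unfolding ordc_def by (rule LeastI[of _ N]) (rule N(2))
  have "ordc C \<le> N" unfolding ordc_def by (rule Least_le) (rule N(2))
  thus "ordc C \<le> B" using N(1) by simp
  show "\<forall>N<ordc C. \<forall>j\<in>A. fps_nth (comb m V C j) N = 0"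
    unfolding ordc_def using not_less_Least by blast
qed

lemma ordc_ge:
  assumes "\<exists>k\<in>{1..m}. coeff (C k) 0 \<noteq> 0" "\<forall>N<p. \<forall>j\<in>A. fps_nth (comb m V C j) N = 0"
  shows "p \<le> ordc C"
  using ordc_props(2)[OF assms(1)] assms(2) by (meson not_le)

definition Inv :: "nat \<Rightarrow> (nat \<Rightarrow> nat) \<Rightarrow> (nat \<Rightarrow> nat \<Rightarrow> complex poly) \<Rightarrow> (nat \<Rightarrow> nat) \<Rightarrow> bool" where
  "Inv r \<sigma> Cs \<nu> \<longleftrightarrow>
    inj_on \<sigma> {1..r} \<and> \<sigma> ` {1..r} \<subseteq> {1..m} \<and>
    (\<forall>k\<in>{1..r}. Cs k (\<sigma> k) = 1 \<and> (\<forall>i\<in>{1..m}. i \<notin> \<sigma> ` {1..k} \<longrightarrow> Cs k i = 0)) \<and>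
    (\<forall>k\<in>{1..r}. (\<forall>N<\<nu> k. \<forall>j\<in>A. fps_nth (comb m V (Cs k) j) N = 0) \<and> (\<exists>j\<in>A. fps_nth (comb m V (Cs k) j) (\<nu> k) \<noteq> 0)) \<and>
    cindep {1..r} A (\<lambda>k j. fps_nth (comb m V (Cs k) j) (\<nu> k)) \<and>
    (\<forall>k\<in>{1..r}. \<forall>l\<in>{1..r}. k \<le> l \<longrightarrow> \<nu> k \<le> \<nu> l) \<and>
    (\<forall>k\<in>{1..r}. \<nu> k \<le> B) \<and>
    (1 \<le> r \<longrightarrow> (\<forall>i\<in>{1..m} - \<sigma> ` {1..r}. \<exists>D\<in>Dset m \<sigma> r i. \<forall>N<\<nu> r. \<forall>j\<in>A. fps_nth (comb m V D j) N = 0))"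

lemma Inv0: "Inv 0 id Cs \<nu>"
  unfolding Inv_def cindep_def by auto

lemma Dset_coeff: "D \<in> Dset m \<sigma> r i \<Longrightarrow> i \<in> {1..m} \<Longrightarrow> \<exists>k\<in>{1..m}. coeff (D k) 0 \<noteq> 0"
  unfolding Dset_def by (intro bexI[of _ i]) auto

lemma comb_lin:
  "comb m V (\<lambda>i. P i - (\<Sum>k\<in>K. Q k * R k i)) j = comb m V P j - (\<Sum>k\<in>K. fps_of_poly (Q k) * comb m V (R k) j)"
  unfolding comb_def fps_of_poly_diff fps_of_poly_sum fps_of_poly_mult
  by (simp add: algebra_simps sum_subtractf sum_distrib_left sum_distrib_right sum.swap[of _ K])

lemma step:
  assumes I: "Inv r \<sigma> Cs \<nu>" and r: "r < m"
  shows "\<exists>\<sigma>' Cs' \<nu>'. Inv (Suc r) \<sigma>' Cs' \<nu>'"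
proof -
  note I' = I[unfolded Inv_def]
  have I1: "inj_on \<sigma> {1..r}" using I' by blast
  have I2: "\<sigma> ` {1..r} \<subseteq> {1..m}" using I' by blast
  have I3: "\<forall>k\<in>{1..r}. Cs k (\<sigma> k) = 1 \<and> (\<forall>i\<in>{1..m}. i \<notin> \<sigma> ` {1..k} \<longrightarrow> Cs k i = 0)" using I' by blast
  have I4: "\<forall>k\<in>{1..r}. (\<forall>N<\<nu> k. \<forall>j\<in>A. fps_nth (comb m V (Cs k) j) N = 0) \<and> (\<exists>j\<in>A. fps_nth (comb m V (Cs k) j) (\<nu> k) \<noteq> 0)" using I' by blast
  have I5: "cindep {1..r} A (\<lambda>k j. fps_nth (comb m V (Cs k) j) (\<nu> k))" using I' by blast
  have I6: "\<forall>k\<in>{1..r}. \<forall>l\<in>{1..r}. k \<le> l \<longrightarrow> \<nu> k \<le> \<nu> l" using I' by blast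
  have I7: "\<forall>k\<in>{1..r}. \<nu> k \<le> B" using I' by blast
  have I8: "1 \<le> r \<longrightarrow> (\<forall>i\<in>{1..m} - \<sigma> ` {1..r}. \<exists>D\<in>Dset m \<sigma> r i. \<forall>N<\<nu> r. \<forall>j\<in>A. fps_nth (comb m V D j) N = 0)" using I' by blast
  define R where "R = {1..m} - \<sigma> ` {1..r}"
  have cardim: "card (\<sigma> ` {1..r}) = r" using I1 card_image by fastforce
  have Rne: "R \<noteq> {}"
  proof
    assume "R = {}"
    hence "{1..m} \<subseteq> \<sigma> ` {1..r}" unfolding R_def by auto
    hence "card {1..m} \<le> card (\<sigma> ` {1..r})" by (intro card_mono) auto
    thus False using cardim r by simp
  qed
  have fR: "finite R" unfolding R_def by auto
  define Oo where "Oo = (\<lambda>i. ordc ` Dset m \<sigma> r i)"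
  define \<mu> where "\<mu> = (\<lambda>i. Max (Oo i))"
  have Ofin: "finite (Oo i)" if "i \<in> R" for i
  proof -
    have "Oo i \<subseteq> {..B}" unfolding Oo_def using ordc_props(1) Dset_coeff that R_def by fastforce
    thus ?thesis using finite_subset by blast
  qed
  have Ine: "(\<lambda>x. if x = i then 1 else 0) \<in> Dset m \<sigma> r i" for i unfolding Dset_def by auto
  hence One: "Oo i \<noteq> {}" for i unfolding Oo_def by blast
  have mu_ge: "ordc D \<le> \<mu> i" if "i \<in> R" "D \<in> Dset m \<sigma> r i" for i D
    unfolding \<mu>_def using Ofin[OF that(1)] that(2) unfolding Oo_def by auto
  have mu_in: "\<exists>D\<in>Dset m \<sigma> r i. ordc D = \<mu> i" if "i \<in> R" for i
  proof -
    have "\<mu> i \<in> Oo i" unfolding \<mu>_def using Ofin[OF that] One by (rule Max_in)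
    thus ?thesis unfolding Oo_def by auto
  qed
  obtain ist where ist: "ist \<in> R" "\<forall>i\<in>R. \<mu> ist \<le> \<mu> i"
  proof -
    have "Min (\<mu> ` R) \<in> \<mu> ` R" using fR Rne by (intro Min_in) auto
    then obtain ist where "ist \<in> R" "\<mu> ist = Min (\<mu> ` R)" by auto
    moreover have "\<forall>i\<in>R. Min (\<mu> ` R) \<le> \<mu> i" using fR by auto
    ultimately show ?thesis using that by auto
  qed
  obtain Ds where Ds: "Ds \<in> Dset m \<sigma> r ist" "ordc Ds = \<mu> ist" using mu_in[OF ist(1)] by blast
  have isR: "ist \<in> {1..m}" "ist \<notin> \<sigma> ` {1..r}" using ist(1) R_def by auto
  have Dsc: "\<exists>k\<in>{1..m}. coeff (Ds k) 0 \<noteq> 0" using Dset_coeff[OF Ds(1) isR(1)] .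
  define \<sigma>' where "\<sigma>' = \<sigma>(Suc r := ist)"
  define Cs' where "Cs' = Cs(Suc r := Ds)"
  define \<nu>' where "\<nu>' = \<nu>(Suc r := \<mu> ist)"
  have sk: "\<sigma>' ` {1..k} = \<sigma> ` {1..k}" if "k \<le> r" for k
    unfolding \<sigma>'_def using that by (intro image_cong) auto
  have sSr: "\<sigma>' ` {1..Suc r} = insert ist (\<sigma> ` {1..r})"
  proof -
    have "{1..Suc r} = insert (Suc r) {1..r}" by auto
    hence "\<sigma>' ` {1..Suc r} = insert (\<sigma>' (Suc r)) (\<sigma>' ` {1..r})" by simp
    thus ?thesis using sk[of r] by (simp add: \<sigma>'_def)
  qed
  have nu_le: "\<nu> k \<le> \<mu> ist" if "k \<in> {1..r}" for k
  proof -
    have r1: "1 \<le> r" using that by auto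
    obtain D where D: "D \<in> Dset m \<sigma> r ist" "\<forall>N<\<nu> r. \<forall>j\<in>A. fps_nth (comb m V D j) N = 0"
      using I8 r1 ist(1) R_def by blast
    have "\<nu> r \<le> ordc D" by (rule ordc_ge[OF Dset_coeff[OF D(1) isR(1)] D(2)])
    also have "\<dots> \<le> \<mu> ist" by (rule mu_ge[OF ist(1) D(1)])
    moreover have "\<nu> k \<le> \<nu> r" using I6 that r1 by auto
    ultimately show ?thesis by linarith
  qed
  have indep: "cindep {1..Suc r} A (\<lambda>k j. fps_nth (comb m V (Cs' k) j) (\<nu>' k))"
    unfolding cindep_def
  proof (intro allI impI)
    fix a :: "nat \<Rightarrow> complex"
    assume h: "\<forall>j\<in>A. (\<Sum>k\<in>{1..Suc r}. a k * fps_nth (comb m V (Cs' k) j) (\<nu>' k)) = 0"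
    define \<omega> where "\<omega> = (\<lambda>k j. fps_nth (comb m V (Cs k) j) (\<nu> k))"
    have hs: "a (Suc r) * fps_nth (comb m V Ds j) (\<mu> ist) + (\<Sum>k\<in>{1..r}. a k * \<omega> k j) = 0" if "j \<in> A" for j
    proof -
      have "{1..Suc r} = insert (Suc r) {1..r}" by auto
      hence "(\<Sum>k\<in>{1..Suc r}. a k * fps_nth (comb m V (Cs' k) j) (\<nu>' k)) =
             a (Suc r) * fps_nth (comb m V Ds j) (\<mu> ist) + (\<Sum>k\<in>{1..r}. a k * \<omega> k j)"
        by (simp add: Cs'_def \<nu>'_def \<omega>_def)
      thus ?thesis using h that by simp
    qed
    have aS: "a (Suc r) = 0"
    proof (rule ccontr)
      assume an: "a (Suc r) \<noteq> 0"
      define lam where "lam = (\<lambda>k. - a k / a (Suc r))"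
      have om: "fps_nth (comb m V Ds j) (\<mu> ist) = (\<Sum>k\<in>{1..r}. lam k * \<omega> k j)" if "j \<in> A" for j
      proof -
        have "a (Suc r) * fps_nth (comb m V Ds j) (\<mu> ist) = - (\<Sum>k\<in>{1..r}. a k * \<omega> k j)" using hs[OF that] by (simp add: eq_neg_iff_add_eq_0)
        hence "fps_nth (comb m V Ds j) (\<mu> ist) = - (\<Sum>k\<in>{1..r}. a k * \<omega> k j) / a (Suc r)" using an by (simp add: field_simps)
        thus ?thesis unfolding lam_def by (simp add: sum_divide_distrib sum_negf[symmetric])
      qed
      define D' where "D' = (\<lambda>i. Ds i - (\<Sum>k\<in>{1..r}. monom (lam k) (\<mu> ist - \<nu> k) * Cs k i))"
      have D'D: "D' \<in> Dset m \<sigma> r ist"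
        unfolding Dset_def
      proof (intro CollectI conjI ballI impI)
        have "Cs k ist = 0" if "k \<in> {1..r}" for k
        proof -
          have "ist \<notin> \<sigma> ` {1..k}" using isR that by auto
          thus ?thesis using I3 that isR by auto
        qed
        thus "D' ist = 1" using Ds(1) unfolding D'_def Dset_def by simp
      next
        fix i' assume i': "i' \<in> {1..m}" "i' \<noteq> ist \<and> i' \<notin> \<sigma> ` {1..r}"
        have "Cs k i' = 0" if "k \<in> {1..r}" for k
        proof -
          have "i' \<notin> \<sigma> ` {1..k}" using i' that by auto
          thus ?thesis using I3 that i' by auto
        qed
        moreover have "Ds i' = 0" using Ds(1) i' unfolding Dset_def by auto
        ultimately show "D' i' = 0" unfolding D'_def by simp
      qed
      have cD': "comb m V D' j = comb m V Ds j - (\<Sum>k\<in>{1..r}. fps_const (lam k) * (fps_X ^ (\<mu> ist - \<nu> k) * comb m V (Cs k) j))" for j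
        unfolding D'_def comb_lin by (simp add: fps_of_poly_monom mult.assoc)
      have z: "fps_nth (comb m V D' j) N = 0" if "j \<in> A" "N \<le> \<mu> ist" for j N
      proof -
        have t: "fps_nth (fps_X ^ (\<mu> ist - \<nu> k) * comb m V (Cs k) j) N = (if N = \<mu> ist then \<omega> k j else 0)" if k: "k \<in> {1..r}" for k
        proof -
          have "\<nu> k \<le> \<mu> ist" by (rule nu_le[OF k])
          moreover have "\<forall>N<\<nu> k. fps_nth (comb m V (Cs k) j) N = 0" using I4 k \<open>j \<in> A\<close> by auto
          ultimately show ?thesis unfolding fps_X_power_mult_nth \<omega>_def using \<open>N \<le> \<mu> ist\<close>
            by (cases "N = \<mu> ist") auto
        qed
        have "fps_nth (comb m V D' j) N = fps_nth (comb m V Ds j) N - (\<Sum>k\<in>{1..r}. lam k * (if N = \<mu> ist then \<omega> k j else 0))"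
        proof -
          have "fps_nth (\<Sum>k\<in>{1..r}. fps_const (lam k) * (fps_X ^ (\<mu> ist - \<nu> k) * comb m V (Cs k) j)) N
             = (\<Sum>k\<in>{1..r}. lam k * (if N = \<mu> ist then \<omega> k j else 0))"
            unfolding fps_sum_nth fps_mult_left_const_nth by (rule sum.cong[OF refl]) (simp add: t)
          thus ?thesis unfolding cD' fps_sub_nth by simp
        qed
        moreover have "N < \<mu> ist \<Longrightarrow> fps_nth (comb m V Ds j) N = 0" using ordc_props(3)[OF Dsc] Ds(2) that by auto
        ultimately show ?thesis using om[OF that(1)] \<open>N \<le> \<mu> ist\<close> by (cases "N = \<mu> ist") auto
      qed
      have D'c: "\<exists>k\<in>{1..m}. coeff (D' k) 0 \<noteq> 0" by (rule Dset_coeff[OF D'D isR(1)])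
      have "Suc (\<mu> ist) \<le> ordc D'" by (rule ordc_ge[OF D'c]) (use z in auto)
      moreover have "ordc D' \<le> \<mu> ist" by (rule mu_ge[OF ist(1) D'D])
      ultimately show False by simp
    qed
    have "\<forall>j\<in>A. (\<Sum>k\<in>{1..r}. a k * \<omega> k j) = 0" using hs aS by simp
    hence "\<forall>k\<in>{1..r}. a k = 0" using I5 unfolding cindep_def \<omega>_def by blast
    thus "\<forall>k\<in>{1..Suc r}. a k = 0" using aS by (auto simp: le_Suc_eq)
  qed
  have "Inv (Suc r) \<sigma>' Cs' \<nu>'"
    unfolding Inv_def
  proof (intro conjI)
    show "inj_on \<sigma>' {1..Suc r}"
    proof -
      have "inj_on \<sigma>' {1..r} = inj_on \<sigma> {1..r}" by (rule inj_on_cong) (auto simp: \<sigma>'_def)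
      hence "inj_on \<sigma>' {1..r}" using I1 by simp
      moreover have "\<sigma>' (Suc r) \<notin> \<sigma>' ` {1..r}" using isR sk[of r] by (simp add: \<sigma>'_def)
      moreover have "{1..Suc r} = insert (Suc r) {1..r}" by auto
      ultimately show ?thesis by simp
    qed
    show "\<sigma>' ` {1..Suc r} \<subseteq> {1..m}" using sSr I2 isR by auto
    show "\<forall>k\<in>{1..Suc r}. Cs' k (\<sigma>' k) = 1 \<and> (\<forall>i\<in>{1..m}. i \<notin> \<sigma>' ` {1..k} \<longrightarrow> Cs' k i = 0)"
    proof
      fix k assume k: "k \<in> {1..Suc r}"
      show "Cs' k (\<sigma>' k) = 1 \<and> (\<forall>i\<in>{1..m}. i \<notin> \<sigma>' ` {1..k} \<longrightarrow> Cs' k i = 0)"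
      proof (cases "k = Suc r")
        case True thus ?thesis using Ds(1) sSr unfolding Dset_def Cs'_def \<sigma>'_def by auto
      next
        case False hence "k \<in> {1..r}" "k \<le> r" using k by auto
        thus ?thesis using I3 sk[of k] False unfolding Cs'_def \<sigma>'_def by auto
      qed
    qed
    show "\<forall>k\<in>{1..Suc r}. (\<forall>N<\<nu>' k. \<forall>j\<in>A. fps_nth (comb m V (Cs' k) j) N = 0) \<and> (\<exists>j\<in>A. fps_nth (comb m V (Cs' k) j) (\<nu>' k) \<noteq> 0)"
    proof
      fix k assume k: "k \<in> {1..Suc r}"
      show "(\<forall>N<\<nu>' k. \<forall>j\<in>A. fps_nth (comb m V (Cs' k) j) N = 0) \<and> (\<exists>j\<in>A. fps_nth (comb m V (Cs' k) j) (\<nu>' k) \<noteq> 0)"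
      proof (cases "k = Suc r")
        case True thus ?thesis using ordc_props(2,3)[OF Dsc] Ds(2) unfolding Cs'_def \<nu>'_def by auto
      next
        case False hence "k \<in> {1..r}" using k by auto
        thus ?thesis using I4 False unfolding Cs'_def \<nu>'_def by auto
      qed
    qed
    show "cindep {1..Suc r} A (\<lambda>k j. fps_nth (comb m V (Cs' k) j) (\<nu>' k))" by (rule indep)
    show "\<forall>k\<in>{1..Suc r}. \<forall>l\<in>{1..Suc r}. k \<le> l \<longrightarrow> \<nu>' k \<le> \<nu>' l"
    proof (intro ballI impI)
      fix k l assume kl: "k \<in> {1..Suc r}" "l \<in> {1..Suc r}" "k \<le> l"
      show "\<nu>' k \<le> \<nu>' l"
      proof (cases "l = Suc r")
        case True thus ?thesis using nu_le[of k] kl unfolding \<nu>'_def by (cases "k = Suc r") auto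
      next
        case False thus ?thesis using I6 kl unfolding \<nu>'_def by auto
      qed
    qed
    show "\<forall>k\<in>{1..Suc r}. \<nu>' k \<le> B"
      using I7 ordc_props(1)[OF Dsc] Ds(2) unfolding \<nu>'_def by (auto simp: le_Suc_eq)
    show "1 \<le> Suc r \<longrightarrow> (\<forall>i\<in>{1..m} - \<sigma>' ` {1..Suc r}. \<exists>D\<in>Dset m \<sigma>' (Suc r) i. \<forall>N<\<nu>' (Suc r). \<forall>j\<in>A. fps_nth (comb m V D j) N = 0)"
    proof (intro impI ballI)
      fix i assume i: "i \<in> {1..m} - \<sigma>' ` {1..Suc r}"
      hence iR: "i \<in> R" using sSr R_def by auto
      obtain D where D: "D \<in> Dset m \<sigma> r i" "ordc D = \<mu> i" using mu_in[OF iR] by blast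
      have "D \<in> Dset m \<sigma>' (Suc r) i" using D(1) sSr unfolding Dset_def by auto
      moreover have "\<forall>N<\<nu>' (Suc r). \<forall>j\<in>A. fps_nth (comb m V D j) N = 0"
        using ordc_props(3)[OF Dset_coeff[OF D(1)]] D(2) ist(2) iR i unfolding \<nu>'_def by fastforce
      ultimately show "\<exists>D\<in>Dset m \<sigma>' (Suc r) i. \<forall>N<\<nu>' (Suc r). \<forall>j\<in>A. fps_nth (comb m V D j) N = 0" by blast
    qed
  qed
  thus ?thesis by blast
qed

lemma Inv_all: "r \<le> m \<Longrightarrow> \<exists>\<sigma> Cs \<nu>. Inv r \<sigma> Cs \<nu>"
proof (induction r)
  case 0 show ?case using Inv0 by blast
next
  case (Suc r) thus ?case using step by (meson Suc_leD Suc_le_lessD)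
qed

lemma greedy:
  "\<exists>\<sigma>. \<sigma> permutes {1..m} \<and> (\<exists>c \<omega> \<nu>.
     (\<forall>k\<in>{1..m}. (\<exists>j\<in>A. \<omega> k j \<noteq> 0) \<and>
        (\<forall>N<\<nu> k. \<forall>j\<in>A. fps_nth (V (\<sigma> k) j + (\<Sum>l\<in>{1..<k}. fps_of_poly (c k l) * V (\<sigma> l) j)) N = 0) \<and>
        (\<forall>j\<in>A. fps_nth (V (\<sigma> k) j + (\<Sum>l\<in>{1..<k}. fps_of_poly (c k l) * V (\<sigma> l) j)) (\<nu> k) = \<omega> k j)) \<and>
     cindep {1..m} A \<omega> \<and> (\<forall>k\<in>{1..m}. \<forall>l\<in>{1..m}. k \<le> l \<longrightarrow> \<nu> k \<le> \<nu> l) \<and> (\<forall>k\<in>{1..m}. \<nu> k \<le> B))"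
proof -
  obtain \<sigma> Cs \<nu> where I: "Inv m \<sigma> Cs \<nu>" using Inv_all[of m] by blast
  note I' = I[unfolded Inv_def]
  have I1: "inj_on \<sigma> {1..m}" using I' by blast
  have I2: "\<sigma> ` {1..m} \<subseteq> {1..m}" using I' by blast
  have I3: "\<forall>k\<in>{1..m}. Cs k (\<sigma> k) = 1 \<and> (\<forall>i\<in>{1..m}. i \<notin> \<sigma> ` {1..k} \<longrightarrow> Cs k i = 0)" using I' by blast
  have I4: "\<forall>k\<in>{1..m}. (\<forall>N<\<nu> k. \<forall>j\<in>A. fps_nth (comb m V (Cs k) j) N = 0) \<and> (\<exists>j\<in>A. fps_nth (comb m V (Cs k) j) (\<nu> k) \<noteq> 0)" using I' by blast
  have I5: "cindep {1..m} A (\<lambda>k j. fps_nth (comb m V (Cs k) j) (\<nu> k))" using I' by blast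
  have I6: "\<forall>k\<in>{1..m}. \<forall>l\<in>{1..m}. k \<le> l \<longrightarrow> \<nu> k \<le> \<nu> l" using I' by blast
  have I7: "\<forall>k\<in>{1..m}. \<nu> k \<le> B" using I' by blast
  have im: "\<sigma> ` {1..m} = {1..m}"
    using I2 card_image[OF I1] by (intro card_subset_eq) auto
  define \<sigma>2 where "\<sigma>2 = (\<lambda>x. if x \<in> {1..m} then \<sigma> x else x)"
  have perm: "\<sigma>2 permutes {1..m}"
  proof (rule bij_imp_permutes)
    have "inj_on \<sigma>2 {1..m} = inj_on \<sigma> {1..m}" by (rule inj_on_cong) (auto simp: \<sigma>2_def)
    moreover have "\<sigma>2 ` {1..m} = \<sigma> ` {1..m}" by (rule image_cong) (auto simp: \<sigma>2_def)
    ultimately show "bij_betw \<sigma>2 {1..m} {1..m}" unfolding bij_betw_def using I1 im by simp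
    show "\<And>x. x \<notin> {1..m} \<Longrightarrow> \<sigma>2 x = x" by (auto simp: \<sigma>2_def)
  qed
  define c where "c = (\<lambda>k l. Cs k (\<sigma> l))"
  have E: "V (\<sigma>2 k) j + (\<Sum>l\<in>{1..<k}. fps_of_poly (c k l) * V (\<sigma>2 l) j) = comb m V (Cs k) j"
    if k: "k \<in> {1..m}" for k j
  proof -
    have sub: "\<sigma> ` {1..k} \<subseteq> {1..m}" using I2 k by auto
    have inj: "inj_on \<sigma> {1..k}" by (rule inj_on_subset[OF I1]) (use k in auto)
    have "comb m V (Cs k) j = (\<Sum>i\<in>\<sigma> ` {1..k}. fps_of_poly (Cs k i) * V i j)"
      unfolding comb_def by (rule sum.mono_neutral_right) (use sub I3 k in auto)
    also have "\<dots> = (\<Sum>l\<in>{1..k}. fps_of_poly (Cs k (\<sigma> l)) * V (\<sigma> l) j)"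
      by (rule sum.reindex[OF inj, unfolded comp_def])
    also have "\<dots> = fps_of_poly (Cs k (\<sigma> k)) * V (\<sigma> k) j + (\<Sum>l\<in>{1..<k}. fps_of_poly (Cs k (\<sigma> l)) * V (\<sigma> l) j)"
    proof -
      have "{1..k} = insert k {1..<k}" using k by auto
      thus ?thesis by simp
    qed
    also have "\<dots> = V (\<sigma>2 k) j + (\<Sum>l\<in>{1..<k}. fps_of_poly (c k l) * V (\<sigma>2 l) j)"
      using I3 k by (auto simp: \<sigma>2_def c_def intro!: sum.cong)
    finally show ?thesis by simp
  qed
  show ?thesis
  proof (intro exI conjI)
    show "\<sigma>2 permutes {1..m}" by (rule perm)
    show "\<forall>k\<in>{1..m}. (\<exists>j\<in>A. fps_nth (comb m V (Cs k) j) (\<nu> k) \<noteq> 0) \<and>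
        (\<forall>N<\<nu> k. \<forall>j\<in>A. fps_nth (V (\<sigma>2 k) j + (\<Sum>l\<in>{1..<k}. fps_of_poly (c k l) * V (\<sigma>2 l) j)) N = 0) \<and>
        (\<forall>j\<in>A. fps_nth (V (\<sigma>2 k) j + (\<Sum>l\<in>{1..<k}. fps_of_poly (c k l) * V (\<sigma>2 l) j)) (\<nu> k) = fps_nth (comb m V (Cs k) j) (\<nu> k))"
      using I4 E by simp
    show "cindep {1..m} A (\<lambda>k j. fps_nth (comb m V (Cs k) j) (\<nu> k))" by (rule I5)
  qed (use I6 I7 in auto)
qed

end



lemma HF:
  assumes fin: "finite (supp g)" and d: "dW n w (slice g \<tau>) = real L"
  shows "facef n w (slice g \<tau>) = Hp n w \<tau> g L"
proof
  fix \<beta>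
  show "facef n w (slice g \<tau>) \<beta> = Hp n w \<tau> g L \<beta>"
  proof (cases "slice g \<tau> \<beta> = 0")
    case True thus ?thesis unfolding facef_def Hp_def by simp
  next
    case False
    hence b0: "\<beta> 0 = 0" using slice_0 by blast
    have bs: "\<beta> \<in> supp (slice g \<tau>)" using False by (simp add: supp_def)
    have np: "rvec n \<beta> \<in> newton_plus n (slice g \<tau>)" by (rule L2[OF finite_supp_slice[OF fin] bs])
    have "rvec n \<beta> \<in> Delta n w (slice g \<tau>) \<longleftrightarrow> Vn n w \<beta> = L"
      unfolding Delta_def using np d wdot_rvec[of n w \<beta>] by auto
    thus ?thesis unfolding facef_def Hp_def using b0 by simp
  qed
qed

lemma HP2:
  assumes fin: "finite (supp g)" and i: "i \<in> {1..n}" and wi: "w i \<le> L"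
  shows "Hp n w \<tau> (pderivv i g) (L - w i) = pderivv i (Hp n w \<tau> g L)"
proof
  fix \<beta>
  have i0: "i \<noteq> 0" using i by auto
  have V: "Vn n w (\<beta>(i := \<beta> i + 1)) = Vn n w \<beta> + w i" by (rule Vn_inc[OF i])
  have r: "pderivv i (Hp n w \<tau> g L) \<beta> = of_nat (\<beta> i + 1) * Hp n w \<tau> g L (\<beta>(i := \<beta> i + 1))"
    by (simp add: pderivv_def)
  have l: "Hp n w \<tau> (pderivv i g) (L - w i) \<beta> = (if \<beta> 0 = 0 \<and> Vn n w \<beta> = L - w i then slice (pderivv i g) \<tau> \<beta> else 0)"
    by (simp add: Hp_def)
  have h: "Hp n w \<tau> g L (\<beta>(i := \<beta> i + 1)) = (if \<beta> 0 = 0 \<and> Vn n w \<beta> + w i = L then slice g \<tau> (\<beta>(i := \<beta> i + 1)) else 0)"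
    using i0 V by (simp add: Hp_def)
  show "Hp n w \<tau> (pderivv i g) (L - w i) \<beta> = pderivv i (Hp n w \<tau> g L) \<beta>"
  proof (cases "\<beta> 0 = 0")
    case True
    have "Vn n w \<beta> = L - w i \<longleftrightarrow> Vn n w \<beta> + w i = L" using wi by auto
    thus ?thesis unfolding l r h using True slice_pderivv[where g=g and i=i and \<beta>=\<beta> and t=\<tau>, OF fin i0 True] by auto
  next
    case False thus ?thesis unfolding l r h by simp
  qed
qed

lemma HP3:
  assumes i: "i \<in> {1..n}" and wi: "L < w i"
  shows "pderivv i (Hp n w \<tau> g L) = (\<lambda>_. 0)"
proof
  fix \<beta>
  have "Vn n w (\<beta>(i := \<beta> i + 1)) = Vn n w \<beta> + w i" by (rule Vn_inc[OF i])
  thus "pderivv i (Hp n w \<tau> g L) \<beta> = 0" using wi unfolding pderivv_def Hp_def by auto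
qed

lemma peval_zero: "peval n (\<lambda>_. 0) z = 0"
  unfolding peval_def supp_def by simp

lemma GL:
  assumes fin: "finite (supp g)" and e: "e > 0"
    and d: "\<forall>t. cmod t < e \<longrightarrow> dW n w (slice g t) = real D" and a: "\<alpha> \<in> supp g"
  shows "D \<le> Vn n w \<alpha>"
proof -
  define \<beta> where "\<beta> = \<alpha>(0 := 0)"
  define S where "S = {\<alpha>'\<in>supp g. \<alpha>'(0 := 0) = \<beta>}"
  have fS: "finite S" using fin unfolding S_def by auto
  define p where "p = (\<Sum>\<alpha>'\<in>S. monom (g \<alpha>') (\<alpha>' 0))"
  have ev: "poly p t = slice g t \<beta>" for t
  proof -
    have "{\<alpha>'. g \<alpha>' \<noteq> 0 \<and> \<alpha>'(0 := 0) = \<beta>} = S" unfolding S_def supp_def by auto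
    thus ?thesis unfolding p_def slice_def \<beta>_def by (simp add: poly_sum poly_monom)
  qed
  have "coeff p (\<alpha> 0) = (\<Sum>\<alpha>'\<in>S. if \<alpha>' = \<alpha> then g \<alpha> else 0)"
    unfolding p_def coeff_sum coeff_monom
  proof (rule sum.cong[OF refl])
    fix \<alpha>' assume "\<alpha>' \<in> S"
    hence h: "\<alpha>'(0 := 0) = \<alpha>(0 := 0)" unfolding S_def \<beta>_def by auto
    have "\<alpha>' 0 = \<alpha> 0 \<longleftrightarrow> \<alpha>' = \<alpha>"
    proof
      assume "\<alpha>' 0 = \<alpha> 0"
      show "\<alpha>' = \<alpha>"
      proof
        fix j show "\<alpha>' j = \<alpha> j" using fun_cong[OF h, of j] \<open>\<alpha>' 0 = \<alpha> 0\<close> by (cases "j = 0") auto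
      qed
    qed simp
    thus "(if \<alpha>' 0 = \<alpha> 0 then g \<alpha>' else 0) = (if \<alpha>' = \<alpha> then g \<alpha> else 0)" by auto
  qed
  also have "\<dots> = g \<alpha>" using fS a unfolding S_def \<beta>_def by simp
  finally have "coeff p (\<alpha> 0) \<noteq> 0" using a by (simp add: supp_def)
  hence pn: "p \<noteq> 0" by auto
  have fr: "finite {t. poly p t = 0}" by (rule poly_roots_finite[OF pn])
  define x where "x = (\<lambda>k::nat. complex_of_real (e / 2 * inverse (real (Suc k))))"
  have injx: "inj x" unfolding x_def inj_def using e by auto
  have "\<exists>k. poly p (x k) \<noteq> 0"
  proof (rule ccontr)
    assume "\<not> (\<exists>k. poly p (x k) \<noteq> 0)"
    hence "range x \<subseteq> {t. poly p t = 0}" by auto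
    hence "finite (range x)" using fr finite_subset by blast
    thus False using injx finite_imageD by fastforce
  qed
  then obtain k where k: "poly p (x k) \<noteq> 0" by blast
  have xs: "cmod (x k) < e"
  proof -
    define r where "r = e / 2 * inverse (real (Suc k))"
    have "r \<le> e / 2" using e unfolding r_def by (simp add: field_simps)
    moreover have "0 \<le> r" using e unfolding r_def by simp
    moreover have "cmod (x k) = \<bar>r\<bar>" unfolding x_def r_def by (rule norm_of_real)
    ultimately show ?thesis using e by simp
  qed
  have bs: "\<beta> \<in> supp (slice g (x k))" using k ev by (simp add: supp_def)
  have "real D = dW n w (slice g (x k))" using d xs by simp
  also have "\<dots> = mw n (\<lambda>i. real (w i)) (slice g (x k))"
    by (rule dW_mw) (use finite_supp_slice[OF fin] bs in auto)
  also have "\<dots> \<le> wdot n (\<lambda>i. real (w i)) (rvec n \<beta>)" by (rule mw_le[OF finite_supp_slice[OF fin] bs])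
  also have "\<dots> = real (Vn n w \<alpha>)" unfolding wdot_rvec \<beta>_def Vn_upd0 ..
  finally show ?thesis by simp
qed

lemma nondeg_ne:
  assumes "nondeg n {k} g"
  shows "supp (g k) \<noteq> {}"
proof
  assume e: "supp (g k) = {}"
  hence g0: "g k = (\<lambda>_. 0)" unfolding supp_def by auto
  have f0: "facef n (\<lambda>_. 1) (g k) = (\<lambda>_. 0)" using g0 unfolding facef_def by auto
  have pd0: "pderivv i (\<lambda>_. 0) = (\<lambda>_. 0)" for i unfolding pderivv_def by auto
  define z where "z = (\<lambda>i::nat. if i \<in> {1..n} then (1::complex) else 0)"
  have z: "z \<in> Cstar {1..n}" unfolding Cstar_def z_def by auto
  have ci: "cindep {k} {1..n} (\<lambda>k' i. peval n (pderivv i (facef n (\<lambda>_. 1) (g k'))) z)"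
    using assms z f0 unfolding nondeg_def by (auto simp: peval_zero)
  have "\<forall>i\<in>{1..n}. (\<Sum>k'\<in>{k}. (\<lambda>_. 1::complex) k' * peval n (pderivv i (facef n (\<lambda>_. 1) (g k'))) z) = 0
     \<Longrightarrow> (\<lambda>_. 1::complex) k = 0"
    using spec[OF ci[unfolded cindep_def], of "\<lambda>_. 1::complex"] by simp
  moreover have "\<forall>i\<in>{1..n}. (\<Sum>k'\<in>{k}. (\<lambda>_. 1::complex) k' * peval n (pderivv i (facef n (\<lambda>_. 1) (g k'))) z) = 0"
    by (simp add: facef_def g0 pd0 peval_zero)
  ultimately show False by simp
qed

lemma mult_low_nth:
  fixes F G :: "complex fps"
  assumes "\<forall>q<N. fps_nth G q = 0"
  shows "fps_nth (F * G) N = fps_nth F 0 * fps_nth G N"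
proof -
  have "fps_nth (F * G) N = (\<Sum>i=0..N. if i = 0 then fps_nth F 0 * fps_nth G N else 0)"
    unfolding fps_mult_nth
  proof (rule sum.cong[OF refl])
    fix i assume "i \<in> {0..N}"
    thus "fps_nth F i * fps_nth G (N - i) = (if i = 0 then fps_nth F 0 * fps_nth G N else 0)"
      using assms by (cases "i = 0") auto
  qed
  thus ?thesis by simp
qed



theorem lemma6p1:
  fixes n k0 nI kL kL' :: nat and f :: "nat \<Rightarrow> cpoly" and K :: "nat set"
  assumes polys: "\<forall>k\<in>{1..k0}. is_poly n (f k)"
    and nonconst: "\<forall>k\<in>{1..k0}. \<exists>\<alpha>\<in>supp (f k). \<alpha> \<noteq> (\<lambda>_. 0)"
    and vanish: "\<forall>k\<in>{1..k0}. \<forall>t. peval n (f k) ((\<lambda>_. 0)(0 := t)) = 0"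
    and k0: "k0 \<ge> 1"
    and adm: "newton_admissible n k0 f"
    and nI: "1 \<le> nI" "nI < n"
    and LK: "{1..kL} \<subseteq> K" "K \<subseteq> {1..k0}"
    and Lp: "\<exists>\<epsilon>>0. \<forall>t. cmod t < \<epsilon> \<longrightarrow>
               {k\<in>{1..kL}. {1..nI} \<in> Vset n (slice (f k) t)} = {1..kL'}"
  shows "\<exists>\<delta>>0. \<forall>(\<tau>::complex) (q::nat \<Rightarrow> complex) (tp::real \<Rightarrow> complex) (zp::real \<Rightarrow> nat \<Rightarrow> complex)
            (tc::nat \<Rightarrow> complex) (zc::nat \<Rightarrow> nat \<Rightarrow> complex) (\<epsilon>::real) (w::nat \<Rightarrow> nat) (d::real).
     ((cmod \<tau>)\<^sup>2 + (\<Sum>i\<in>{1..n}. (cmod (q i))\<^sup>2) < \<delta> \<and>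
      (\<tau>, q) \<in> stratum n k0 f {1..nI} K \<and>
      (\<tau>, q) \<in> closure (stratum n k0 f {1..n} {1..kL}) \<and>
      \<epsilon> > 0 \<and> has_ps \<epsilon> tc tp \<and> (\<forall>i\<in>{1..n}. has_ps \<epsilon> (zc i) (\<lambda>s. zp s i)) \<and>
      tp 0 = \<tau> \<and> zp 0 = q \<and>
      (\<forall>s. \<bar>s\<bar> < \<epsilon> \<and> s \<noteq> 0 \<longrightarrow> (tp s, zp s) \<in> stratum n k0 f {1..n} {1..kL}) \<and>
      (\<forall>i\<in>{1..n}. w i = (LEAST m. zc i m \<noteq> 0)) \<and>
      (\<exists>\<epsilon>'>0. \<forall>t. cmod t < \<epsilon>' \<longrightarrow> (\<forall>k\<in>{1..kL'}. dW n w (slice (f k) t) = d)))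
     \<longrightarrow>
     (\<exists>\<sigma>. \<sigma> permutes {1..kL'} \<and>
       (\<exists>(c::nat \<Rightarrow> nat \<Rightarrow> complex poly) (\<omega>::nat \<Rightarrow> nat \<Rightarrow> complex) (\<nu>::nat \<Rightarrow> nat).
          (\<forall>k\<in>{1..kL'}.
             (\<exists>j\<in>{0..n}. \<omega> k j \<noteq> 0) \<and>
             (\<exists>\<epsilon>''>0. \<exists>b::nat \<Rightarrow> nat \<Rightarrow> complex.
                (\<forall>j\<in>{0..n}. has_ps \<epsilon>'' (\<lambda>m. b m j)
                   (\<lambda>s. peval n (pderivv j (f (\<sigma> k))) ((zp s)(0 := tp s)) +
                        (\<Sum>l\<in>{1..<k}. poly (c k l) (complex_of_real s) *
                            peval n (pderivv j (f (\<sigma> l))) ((zp s)(0 := tp s))))) \<and>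
                (\<forall>m<\<nu> k. \<forall>j\<in>{0..n}. b m j = 0) \<and>
                (\<forall>j\<in>{0..n}. b (\<nu> k) j = \<omega> k j))) \<and>
          cindep {1..kL'} {0..n} \<omega> \<and>
          (\<forall>k\<in>{1..kL'}. \<forall>l\<in>{1..kL'}. k \<le> l \<longrightarrow> \<nu> k \<le> \<nu> l) \<and>
          (\<forall>k\<in>{1..kL'}. real (\<nu> k) \<le> d - real (Min (w ` {nI+1..n})))))"
proof -
  obtain R \<epsilon>a where R: "R > 0" "\<epsilon>a > 0" and adm': "\<forall>t t'. cmod t < \<epsilon>a \<longrightarrow> cmod t' < \<epsilon>a \<longrightarrow>
     (\<forall>k\<in>{1..k0}. newton_boundary n (slice (f k) t) = newton_boundary n (slice (f k) t')) \<and>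
     (\<forall>P. P \<noteq> {} \<longrightarrow> P \<subseteq> {1..k0} \<longrightarrow>
        nondeg n P (\<lambda>k. slice (f k) t) \<and> (\<exists>R'>R. tame_radius n P (\<lambda>k. slice (f k) t) R'))"
    using adm unfolding newton_admissible_def by blast
  have adm_b: "\<And>t t'. cmod t < \<epsilon>a \<Longrightarrow> cmod t' < \<epsilon>a \<Longrightarrow>
     (\<forall>k\<in>{1..k0}. newton_boundary n (slice (f k) t) = newton_boundary n (slice (f k) t'))"
    using adm' by blast
  have adm_n: "\<And>t P. cmod t < \<epsilon>a \<Longrightarrow> P \<noteq> {} \<Longrightarrow> P \<subseteq> {1..k0} \<Longrightarrow>
        nondeg n P (\<lambda>k. slice (f k) t) \<and> (\<exists>R'>R. tame_radius n P (\<lambda>k. slice (f k) t) R')"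
    using adm' by blast
  obtain \<epsilon>L where \<epsilon>L: "\<epsilon>L > 0" "\<forall>t. cmod t < \<epsilon>L \<longrightarrow> {k\<in>{1..kL}. {1..nI} \<in> Vset n (slice (f k) t)} = {1..kL'}"
    using Lp by blast
  define \<delta> where "\<delta> = min R (min (\<epsilon>a^2) (\<epsilon>L^2))"
  have \<delta>: "\<delta> > 0" using R \<epsilon>L by (simp add: \<delta>_def)
  show ?thesis
  proof (intro exI[of _ \<delta>] conjI allI impI)
    show "\<delta> > 0" by (rule \<delta>)
    fix \<tau> q tp zp tc zc \<epsilon> w d
    assume H: "(cmod \<tau>)\<^sup>2 + (\<Sum>i\<in>{1..n}. (cmod (q i))\<^sup>2) < \<delta> \<and>
      (\<tau>, q) \<in> stratum n k0 f {1..nI} K \<and>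
      (\<tau>, q) \<in> closure (stratum n k0 f {1..n} {1..kL}) \<and>
      \<epsilon> > 0 \<and> has_ps \<epsilon> tc tp \<and> (\<forall>i\<in>{1..n}. has_ps \<epsilon> (zc i) (\<lambda>s. zp s i)) \<and>
      tp 0 = \<tau> \<and> zp 0 = q \<and>
      (\<forall>s. \<bar>s\<bar> < \<epsilon> \<and> s \<noteq> 0 \<longrightarrow> (tp s, zp s) \<in> stratum n k0 f {1..n} {1..kL}) \<and>
      (\<forall>i\<in>{1..n}. w i = (LEAST m. zc i m \<noteq> 0)) \<and>
      (\<exists>\<epsilon>'>0. \<forall>t. cmod t < \<epsilon>' \<longrightarrow> (\<forall>k\<in>{1..kL'}. dW n w (slice (f k) t) = d))"
    have h1: "(cmod \<tau>)\<^sup>2 + (\<Sum>i\<in>{1..n}. (cmod (q i))\<^sup>2) < \<delta>" using H by blast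
    have h2: "(\<tau>, q) \<in> stratum n k0 f {1..nI} K" using H by blast
    have h4: "\<epsilon> > 0" using H by blast
    have h5: "has_ps \<epsilon> tc tp" using H by blast
    have h6: "\<forall>i\<in>{1..n}. has_ps \<epsilon> (zc i) (\<lambda>s. zp s i)" using H by blast
    have h7: "tp 0 = \<tau>" using H by blast
    have h8: "zp 0 = q" using H by blast
    have h9: "\<forall>s. \<bar>s\<bar> < \<epsilon> \<and> s \<noteq> 0 \<longrightarrow> (tp s, zp s) \<in> stratum n k0 f {1..n} {1..kL}" using H by blast
    have h10: "\<forall>i\<in>{1..n}. w i = (LEAST m. zc i m \<noteq> 0)" using H by blast
    have h11: "\<exists>\<epsilon>'>0. \<forall>t. cmod t < \<epsilon>' \<longrightarrow> (\<forall>k\<in>{1..kL'}. dW n w (slice (f k) t) = d)" using H by blast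
    show "\<exists>\<sigma>. \<sigma> permutes {1..kL'} \<and>
       (\<exists>(c::nat \<Rightarrow> nat \<Rightarrow> complex poly) (\<omega>::nat \<Rightarrow> nat \<Rightarrow> complex) (\<nu>::nat \<Rightarrow> nat).
          (\<forall>k\<in>{1..kL'}.
             (\<exists>j\<in>{0..n}. \<omega> k j \<noteq> 0) \<and>
             (\<exists>\<epsilon>''>0. \<exists>b::nat \<Rightarrow> nat \<Rightarrow> complex.
                (\<forall>j\<in>{0..n}. has_ps \<epsilon>'' (\<lambda>m. b m j)
                   (\<lambda>s. peval n (pderivv j (f (\<sigma> k))) ((zp s)(0 := tp s)) +
                        (\<Sum>l\<in>{1..<k}. poly (c k l) (complex_of_real s) *
                            peval n (pderivv j (f (\<sigma> l))) ((zp s)(0 := tp s))))) \<and>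
                (\<forall>m<\<nu> k. \<forall>j\<in>{0..n}. b m j = 0) \<and>
                (\<forall>j\<in>{0..n}. b (\<nu> k) j = \<omega> k j))) \<and>
          cindep {1..kL'} {0..n} \<omega> \<and>
          (\<forall>k\<in>{1..kL'}. \<forall>l\<in>{1..kL'}. k \<le> l \<longrightarrow> \<nu> k \<le> \<nu> l) \<and>
          (\<forall>k\<in>{1..kL'}. real (\<nu> k) \<le> d - real (Min (w ` {nI+1..n}))))"
    proof (cases "kL' = 0")
      case True
      show ?thesis
        by (rule exI[of _ id]) (simp add: True cindep_def permutes_id)
    next
      case False
      hence m1: "1 \<le> kL'" by simp
      have sq_nonneg: "0 \<le> (\<Sum>i\<in>{1..n}. (cmod (q i))\<^sup>2)" by (rule sum_nonneg) simp
      have tau2: "(cmod \<tau>)\<^sup>2 < \<delta>" using h1 sq_nonneg by linarith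
      have tau_a: "cmod \<tau> < \<epsilon>a"
      proof -
        have "(cmod \<tau>)\<^sup>2 < \<epsilon>a\<^sup>2" using tau2 unfolding \<delta>_def by linarith
        from power_less_imp_less_base[OF this] R(2) show ?thesis by simp
      qed
      have tau_L: "cmod \<tau> < \<epsilon>L"
      proof -
        have "(cmod \<tau>)\<^sup>2 < \<epsilon>L\<^sup>2" using tau2 unfolding \<delta>_def by linarith
        from power_less_imp_less_base[OF this] \<epsilon>L(1) show ?thesis by simp
      qed
      have qR: "(\<Sum>i\<in>{1..nI}. (cmod (q i))\<^sup>2) < R"
      proof -
        have "(\<Sum>i\<in>{1..nI}. (cmod (q i))\<^sup>2) \<le> (\<Sum>i\<in>{1..n}. (cmod (q i))\<^sup>2)"
          by (rule sum_mono2) (use nI in auto)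
        moreover have "(cmod \<tau>)\<^sup>2 \<ge> 0" by simp
        ultimately show ?thesis using h1 unfolding \<delta>_def by linarith
      qed
      define m where "m = kL'"
      have mkL: "kL' \<le> kL"
      proof -
        have "kL' \<in> {k\<in>{1..kL}. {1..nI} \<in> Vset n (slice (f k) 0)}" using \<epsilon>L m1 by auto
        thus ?thesis by auto
      qed
      have PK: "\<forall>k\<in>{1..kL'}. k \<in> K"
      proof
        fix k assume "k \<in> {1..kL'}"
        hence "k \<in> {1..kL}" using mkL by auto
        thus "k \<in> K" using LK(1) by blast
      qed
      have Pk0: "\<forall>k\<in>{1..kL'}. k \<in> {1..k0}" using PK LK(2) by blast
      have Pne: "{1..kL'} \<noteq> {}" and Psub: "{1..kL'} \<subseteq> {1..k0}" using m1 Pk0 by auto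
      have VsetI: "\<forall>k\<in>{1..kL'}. {1..nI} \<in> Vset n (slice (f k) \<tau>)"
        using \<epsilon>L(2) tau_L by auto
      have fin: "finite (supp (f k))" if "k \<in> {1..kL'}" for k
        using polys Pk0 that unfolding is_poly_def by auto
      obtain \<epsilon>d where \<epsilon>d: "\<epsilon>d > 0" "\<forall>t. cmod t < \<epsilon>d \<longrightarrow> (\<forall>k\<in>{1..kL'}. dW n w (slice (f k) t) = d)"
        using h11 by blast
      have ne: "supp (slice (f k) t) \<noteq> {}" if "cmod t < \<epsilon>a" "k \<in> {1..k0}" for t k
      proof -
        have "nondeg n {k} (\<lambda>k. slice (f k) t)" using adm_n[OF that(1), of "{k}"] that by auto
        thus ?thesis by (rule nondeg_ne)
      qed
      have w0: "\<forall>i\<in>{1..n}. (0::real) \<le> real (w i)" by simp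
      have one: "1 \<in> {1..kL'}" using m1 by simp
      obtain \<beta>0 where b0: "\<beta>0 \<in> supp (slice (f 1) 0)"
          "mw n (\<lambda>i. real (w i)) (slice (f 1) 0) = wdot n (\<lambda>i. real (w i)) (rvec n \<beta>0)"
        using mw_attained[OF finite_supp_slice[OF fin[OF one]] ne[of 0 1]] R(2) Pk0 one by auto
      define dn where "dn = Vn n w \<beta>0"
      have d_dn: "d = real dn"
      proof -
        have "d = dW n w (slice (f 1) 0)" using \<epsilon>d one by auto
        also have "\<dots> = mw n (\<lambda>i. real (w i)) (slice (f 1) 0)"
          by (rule dW_mw[OF finite_supp_slice[OF fin[OF one]]]) (use b0 in auto)
        finally show ?thesis using b0(2) wdot_rvec unfolding dn_def by simp
      qed
      have dtau: "dW n w (slice (f k) \<tau>) = real dn" if k: "k \<in> {1..kL'}" for k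
      proof -
        have kk: "k \<in> {1..k0}" using Pk0 k by auto
        have "dW n w (slice (f k) \<tau>) = mw n (\<lambda>i. real (w i)) (slice (f k) \<tau>)"
          by (rule dW_mw[OF finite_supp_slice[OF fin[OF k]] ne[OF tau_a kk]])
        also have "\<dots> = mw n (\<lambda>i. real (w i)) (slice (f k) 0)"
          by (rule mw_eq[OF finite_supp_slice[OF fin[OF k]] ne[OF tau_a kk] finite_supp_slice[OF fin[OF k]] ne[of 0 k]])
             (use adm_b[OF tau_a, of 0] R(2) kk in auto)
        also have "\<dots> = dW n w (slice (f k) 0)"
          by (rule dW_mw[symmetric, OF finite_supp_slice[OF fin[OF k]] ne[of 0 k]]) (use R(2) kk in auto)
        also have "\<dots> = d" using \<epsilon>d k by auto
        finally show ?thesis using d_dn by simp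
      qed
      have GLk: "dn \<le> Vn n w \<alpha>" if k: "k \<in> {1..kL'}" and a: "\<alpha> \<in> supp (f k)" for k \<alpha>
        by (rule GL[OF fin[OF k] \<epsilon>d(1) _ a]) (use \<epsilon>d d_dn k in auto)
      have tc0: "tc 0 = \<tau>"
      proof -
        have "\<bar>0::real\<bar> < \<epsilon>" using h4 by simp
        hence "(\<lambda>m. tc m * (complex_of_real 0) ^ m) sums tp 0" using h5 unfolding has_ps_def by blast
        hence "(\<lambda>m. tc m * 0 ^ m) sums tp 0" by simp
        thus ?thesis using powser_sums_zero[of tc] h7 sums_unique2 by metis
      qed
      have zc0: "zc i 0 = q i" if i: "i \<in> {1..n}" for i
      proof -
        have "\<bar>0::real\<bar> < \<epsilon>" using h4 by simp
        hence "(\<lambda>m. zc i m * (complex_of_real 0) ^ m) sums zp 0 i" using h6 i unfolding has_ps_def by blast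
        hence "(\<lambda>m. zc i m * 0 ^ m) sums zp 0 i" by simp
        thus ?thesis using powser_sums_zero[of "zc i"] h8 sums_unique2 by metis
      qed
      have qC: "q \<in> Cstar {1..nI}" using h2 unfolding stratum_def by auto
      have zne: "\<exists>m. zc i m \<noteq> 0" if i: "i \<in> {1..n}" for i
      proof (rule ccontr)
        assume "\<not> (\<exists>m. zc i m \<noteq> 0)"
        hence z: "zc i = (\<lambda>_. 0)" by auto
        have s: "\<bar>\<epsilon>/2\<bar> < \<epsilon>" "\<epsilon>/2 \<noteq> 0" using h4 by auto
        have "(\<lambda>m. zc i m * (complex_of_real (\<epsilon>/2)) ^ m) sums zp (\<epsilon>/2) i" using h6 s i unfolding has_ps_def by blast
        hence "(\<lambda>m. 0::complex) sums zp (\<epsilon>/2) i" unfolding z by simp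
        from sums_unique2[OF this sums_zero] have "zp (\<epsilon>/2) i = 0" .
        moreover have "zp (\<epsilon>/2) \<in> Cstar {1..n}" using h9 s unfolding stratum_def by auto
        ultimately show False using i unfolding Cstar_def by auto
      qed
      define a where "a = (\<lambda>j. if j \<in> {1..n} then zc j (w j) else 0)"
      have a_ne: "a i \<noteq> 0" if i: "i \<in> {1..n}" for i
        using LeastI_ex[OF zne[OF i]] h10 i unfolding a_def by auto
      have zlow: "zc i k = 0" if i: "i \<in> {1..n}" and k: "k < w i" for i k
        using not_less_Least[of k "\<lambda>m. zc i m \<noteq> 0"] h10 i k by auto
      have wI: "w i = 0 \<and> a i = q i" if i: "i \<in> {1..nI}" for i
      proof -
        have i': "i \<in> {1..n}" using i nI by auto
        have "q i \<noteq> 0" using qC i unfolding Cstar_def by auto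
        hence "zc i 0 \<noteq> 0" using zc0[OF i'] by simp
        hence "w i = 0" using h10 i' by (simp add: Least_eq_0)
        thus ?thesis using zc0[OF i'] i' unfolding a_def by simp
      qed
      have wJ: "w i > 0" if i: "i \<in> {nI+1..n}" for i
      proof (rule ccontr)
        assume "\<not> w i > 0"
        hence "w i = 0" by simp
        hence "a i = zc i 0" using i unfolding a_def by auto
        also have "\<dots> = q i" using zc0 i by auto
        also have "\<dots> = 0" using qC i unfolding Cstar_def by auto
        finally show False using a_ne i by auto
      qed
      have aC: "a \<in> Cstar {1..n}" using a_ne unfolding Cstar_def by (auto simp: a_def)
      define X where "X = (\<lambda>j. if j = 0 then Abs_fps tc else Abs_fps (zc j))"
      define v where "v = (\<lambda>j. if j = 0 then 0 else w j)"
      define Aj where "Aj = (\<lambda>j. if j = 0 then \<tau> else a j)"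
      define \<rho> where "\<rho> = (\<lambda>s. (zp s)(0 := tp s))"
      have fAbs: "fps_nth (Abs_fps g) = g" for g :: "nat \<Rightarrow> complex" by (rule ext) simp
      have XH: "\<forall>j\<in>{0..n}. has_ps \<epsilon> (fps_nth (X j)) (\<lambda>s. \<rho> s j)"
        using h5 h6 unfolding X_def \<rho>_def by (auto simp: fAbs)
      have XL: "\<forall>j\<in>{0..n}. \<forall>k<v j. fps_nth (X j) k = 0"
        using zlow unfolding X_def v_def by auto
      have XA: "fps_nth (X j) (v j) = Aj j" if "j \<in> {0..n}" for j
        using that tc0 unfolding X_def v_def Aj_def a_def by auto
      have SV: "(\<Sum>j\<in>{0..n}. v j * \<alpha> j) = Vn n w \<alpha>" for \<alpha>
        unfolding set0n Vn_def v_def by (simp add: sum.insert)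
      have Aprod: "(\<Prod>j\<in>{0..n}. fps_nth (X j) (v j) ^ \<alpha> j) = (\<Prod>j\<in>{0..n}. Aj j ^ \<alpha> j)" for \<alpha>
        using XA by (intro prod.cong) auto
      have coeffPS: "fps_nth (PS n X g) (Vn n w \<alpha>0 - Vn n w \<alpha>0 + L) = peval n (Hp n w \<tau> g L) a
         \<and> (\<forall>k<L. fps_nth (PS n X g) k = 0)"
        if fg: "finite (supp g)" and Lg: "\<forall>\<alpha>\<in>supp g. L \<le> Vn n w \<alpha>" for g L \<alpha>0
      proof -
        have Lg': "\<forall>\<alpha>\<in>supp g. L \<le> (\<Sum>j\<in>{0..n}. v j * \<alpha> j)" using Lg SV by simp
        have "fps_nth (PS n X g) L = (\<Sum>\<alpha>\<in>{\<alpha>\<in>supp g. (\<Sum>j\<in>{0..n}. v j * \<alpha> j) = L}. g \<alpha> * (\<Prod>j\<in>{0..n}. fps_nth (X j) (v j) ^ \<alpha> j))"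
          by (rule PS_coeff(2)[OF fg XL Lg'])
        also have "\<dots> = (\<Sum>\<alpha>\<in>{\<alpha>\<in>supp g. Vn n w \<alpha> = L}. g \<alpha> * (\<Prod>j\<in>{0..n}. Aj j ^ \<alpha> j))"
          unfolding SV Aprod ..
        also have "\<dots> = peval n (Hp n w \<tau> g L) a"
          by (rule regroup[OF fg]) (auto simp: Aj_def)
        finally show ?thesis using PS_coeff(1)[OF fg XL Lg'] by simp
      qed
      have fzero: "peval n (f k) (\<rho> s) = 0" if k: "k \<in> {1..kL'}" and s: "\<bar>s\<bar> < \<epsilon>" for k s
      proof (cases "s = 0")
        case True
        have "peval n (f k) (q(0 := \<tau>)) = 0" using h2 PK Pk0 k unfolding stratum_def by auto
        thus ?thesis using True h7 h8 unfolding \<rho>_def by simp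
      next
        case False
        have "(tp s, zp s) \<in> stratum n k0 f {1..n} {1..kL}" using h9 s False by auto
        moreover have "k \<in> {1..kL}" using k mkL by auto
        ultimately show ?thesis using Pk0 k unfolding stratum_def \<rho>_def by auto
      qed
      have face0: "peval n (facef n w (slice (f k) \<tau>)) a = 0" if k: "k \<in> {1..kL'}" for k
      proof -
        have hp: "has_ps \<epsilon> (fps_nth (PS n X (f k))) (\<lambda>s. peval n (f k) (\<rho> s))"
          by (rule PS_has_ps[OF fin[OF k] XH])
        have "fps_nth (PS n X (f k)) = (\<lambda>_. 0)"
          by (rule hp_unique_zero[OF hp h4]) (use fzero k in auto)
        moreover have "fps_nth (PS n X (f k)) (Vn n w \<alpha> - Vn n w \<alpha> + dn) = peval n (Hp n w \<tau> (f k) dn) a" for \<alpha>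
          using coeffPS[OF fin[OF k]] GLk k by blast
        ultimately have "peval n (Hp n w \<tau> (f k) dn) a = 0" by metis
        thus ?thesis using HF[OF fin[OF k] dtau[OF k]] by simp
      qed
      define V where "V = (\<lambda>k j. PS n X (pderivv j (f k)))"
      define M where "M = (\<lambda>k i. peval n (pderivv i (facef n w (slice (f k) \<tau>))) a)"
      have Vlow: "(\<forall>N<dn - w i. fps_nth (V k i) N = 0) \<and> fps_nth (V k i) (dn - w i) = M k i"
        if k: "k \<in> {1..kL'}" and i: "i \<in> {1..n}" and wi: "w i \<le> dn" for k i
      proof -
        have fp: "finite (supp (pderivv i (f k)))" by (rule finite_supp_pderivv[OF fin[OF k]])
        have Lg: "\<forall>\<alpha>\<in>supp (pderivv i (f k)). dn - w i \<le> Vn n w \<alpha>"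
        proof
          fix \<alpha> assume "\<alpha> \<in> supp (pderivv i (f k))"
          hence "\<alpha>(i := \<alpha> i + 1) \<in> supp (f k)" unfolding pderivv_supp by simp
          hence "dn \<le> Vn n w (\<alpha>(i := \<alpha> i + 1))" by (rule GLk[OF k])
          thus "dn - w i \<le> Vn n w \<alpha>" using Vn_inc[OF i, of w \<alpha>] by simp
        qed
        have e: "Hp n w \<tau> (pderivv i (f k)) (dn - w i) = pderivv i (facef n w (slice (f k) \<tau>))"
          using HP2[where g="f k" and i=i and n=n and w=w and L=dn and \<tau>=\<tau>, OF fin[OF k] i wi] HF[OF fin[OF k] dtau[OF k]] by simp
        show ?thesis using coeffPS[OF fp Lg, of \<alpha>] e unfolding V_def M_def by simp
      qed
      have Mzero: "M k i = 0" if k: "k \<in> {1..kL'}" and i: "i \<in> {1..n}" and wi: "dn < w i" for k i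
        unfolding M_def HF[OF fin[OF k] dtau[OF k]] HP3[where i=i and n=n and w=w and L=dn, OF i wi] peval_zero ..
      have tame: "cindep {1..kL'} ({1..n} - {1..nI}) M"
      proof -
        obtain R' where R': "R' > R" "tame_radius n {1..kL'} (\<lambda>k. slice (f k) \<tau>) R'"
          using adm_n[OF tau_a Pne Psub] by blast
        have T: "\<forall>I. I \<noteq> {} \<longrightarrow> (\<forall>k\<in>{1..kL'}. I \<in> Vset n (slice (f k) \<tau>)) \<longrightarrow>
          (\<forall>w::nat \<Rightarrow> nat. (\<exists>i\<in>{1..n}. w i \<noteq> 0) \<longrightarrow> {i\<in>{1..n}. w i = 0} = I \<longrightarrow>
           (\<forall>u::nat \<Rightarrow> complex. (\<forall>i\<in>I. u i \<noteq> 0) \<longrightarrow> (\<Sum>i\<in>I. (cmod (u i))\<^sup>2) < R' \<longrightarrow>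
             (\<forall>z\<in>Cstar {1..n}. (\<forall>i\<in>I. z i = u i) \<longrightarrow> (\<forall>k\<in>{1..kL'}. peval n (facef n w (slice (f k) \<tau>)) z = 0) \<longrightarrow>
                cindep {1..kL'} ({1..n} - I) (\<lambda>k i. peval n (pderivv i (facef n w (slice (f k) \<tau>))) z))))"
          using R'(2) unfolding tame_radius_def by (rule conjunct2)
        have I1: "{1..nI} \<noteq> {}" using nI by simp
        have I2: "\<exists>i\<in>{1..n}. w i \<noteq> 0" using wJ[of n] nI by auto
        have I3: "{i\<in>{1..n}. w i = 0} = {1..nI}"
        proof (intro set_eqI iffI)
          fix i assume "i \<in> {i\<in>{1..n}. w i = 0}"
          thus "i \<in> {1..nI}" using wJ[of i] by (cases "i \<le> nI") auto
        next
          fix i assume "i \<in> {1..nI}" thus "i \<in> {i\<in>{1..n}. w i = 0}" using wI[of i] nI by auto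
        qed
        have I4: "\<forall>i\<in>{1..nI}. q i \<noteq> 0" using qC unfolding Cstar_def by auto
        have I5: "\<forall>i\<in>{1..nI}. a i = q i" using wI by auto
        have I6: "(\<Sum>i\<in>{1..nI}. (cmod (q i))\<^sup>2) < R'" using qR R'(1) by simp
        have I7: "\<forall>k\<in>{1..kL'}. peval n (facef n w (slice (f k) \<tau>)) a = 0" using face0 by blast
        show ?thesis unfolding M_def
          by (rule T[rule_format, OF I1 VsetI[rule_format] I2 I3 I4[rule_format] I6 aC I5[rule_format] I7[rule_format]])
      qed
      define wmin where "wmin = Min (w ` {nI+1..n})"
      have wmin_le: "wmin \<le> w i" if "i \<in> {nI+1..n}" for i
        unfolding wmin_def using that by (intro Min_le) auto
      have aux: "\<exists>i\<in>{nI+1..n}. w i \<le> dn \<and> fps_nth (comb kL' V C i) (dn - w i) \<noteq> 0"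
        if C: "\<exists>k\<in>{1..kL'}. coeff (C k) 0 \<noteq> 0" for C
      proof -
        define e where "e = (\<lambda>k. coeff (C k) 0)"
        have "\<not> (\<forall>i\<in>{1..n} - {1..nI}. (\<Sum>k\<in>{1..kL'}. e k * M k i) = 0)"
        proof
          assume "\<forall>i\<in>{1..n} - {1..nI}. (\<Sum>k\<in>{1..kL'}. e k * M k i) = 0"
          hence "\<forall>k\<in>{1..kL'}. e k = 0" using spec[OF tame[unfolded cindep_def], of e] by blast
          thus False using C unfolding e_def by auto
        qed
        then obtain i where i: "i \<in> {1..n} - {1..nI}" "(\<Sum>k\<in>{1..kL'}. e k * M k i) \<noteq> 0" by blast
        have i1: "i \<in> {1..n}" and i2: "i \<in> {nI+1..n}" using i(1) by auto
        have wi: "w i \<le> dn"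
        proof (rule ccontr)
          assume "\<not> w i \<le> dn"
          hence "M k i = 0" if "k \<in> {1..kL'}" for k using Mzero[OF that i1] by simp
          hence "(\<Sum>k\<in>{1..kL'}. e k * M k i) = 0" by simp
          thus False using i(2) by simp
        qed
        have "fps_nth (comb kL' V C i) (dn - w i) = (\<Sum>k\<in>{1..kL'}. e k * M k i)"
          unfolding comb_def fps_sum_nth
        proof (rule sum.cong[OF refl])
          fix k assume k: "k \<in> {1..kL'}"
          show "fps_nth (fps_of_poly (C k) * V k i) (dn - w i) = e k * M k i"
            using mult_low_nth[of "dn - w i" "V k i" "fps_of_poly (C k)"] Vlow[OF k i1 wi] unfolding e_def by simp
        qed
        thus ?thesis using i2 wi i(2) by auto
      qed
      have HB: "\<forall>C. (\<exists>k\<in>{1..kL'}. coeff (C k) 0 \<noteq> 0) \<longrightarrow> (\<exists>N\<le>dn - wmin. \<exists>j\<in>{0..n}. fps_nth (comb kL' V C j) N \<noteq> 0)"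
      proof (intro allI impI)
        fix C :: "nat \<Rightarrow> complex poly" assume "\<exists>k\<in>{1..kL'}. coeff (C k) 0 \<noteq> 0"
        then obtain i where i: "i \<in> {nI+1..n}" "w i \<le> dn" "fps_nth (comb kL' V C i) (dn - w i) \<noteq> 0" using aux by blast
        have "dn - w i \<le> dn - wmin" using wmin_le[OF i(1)] by simp
        moreover have "i \<in> {0..n}" using i(1) by auto
        ultimately show "\<exists>N\<le>dn - wmin. \<exists>j\<in>{0..n}. fps_nth (comb kL' V C j) N \<noteq> 0" using i(3) by blast
      qed
      have wmin_dn: "wmin \<le> dn"
      proof -
        have "\<exists>k\<in>{1..kL'}. coeff ((\<lambda>_. 1::complex poly) k) 0 \<noteq> 0" using one by auto
        then obtain i where i: "i \<in> {nI+1..n}" "w i \<le> dn" using aux[of "\<lambda>_. 1"] by blast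
        thus ?thesis using wmin_le[OF i(1)] by simp
      qed
      obtain \<sigma> where \<sigma>: "\<sigma> permutes {1..kL'}" and ex: "\<exists>c \<omega> \<nu>.
     (\<forall>k\<in>{1..kL'}. (\<exists>j\<in>{0..n}. \<omega> k j \<noteq> 0) \<and>
        (\<forall>N<\<nu> k. \<forall>j\<in>{0..n}. fps_nth (V (\<sigma> k) j + (\<Sum>l\<in>{1..<k}. fps_of_poly (c k l) * V (\<sigma> l) j)) N = 0) \<and>
        (\<forall>j\<in>{0..n}. fps_nth (V (\<sigma> k) j + (\<Sum>l\<in>{1..<k}. fps_of_poly (c k l) * V (\<sigma> l) j)) (\<nu> k) = \<omega> k j)) \<and>
     cindep {1..kL'} {0..n} \<omega> \<and> (\<forall>k\<in>{1..kL'}. \<forall>l\<in>{1..kL'}. k \<le> l \<longrightarrow> \<nu> k \<le> \<nu> l) \<and> (\<forall>k\<in>{1..kL'}. \<nu> k \<le> dn - wmin)"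
        using greedy[OF HB] by blast
      then obtain c \<omega> \<nu> where G1: "\<forall>k\<in>{1..kL'}. (\<exists>j\<in>{0..n}. \<omega> k j \<noteq> 0) \<and>
        (\<forall>N<\<nu> k. \<forall>j\<in>{0..n}. fps_nth (V (\<sigma> k) j + (\<Sum>l\<in>{1..<k}. fps_of_poly (c k l) * V (\<sigma> l) j)) N = 0) \<and>
        (\<forall>j\<in>{0..n}. fps_nth (V (\<sigma> k) j + (\<Sum>l\<in>{1..<k}. fps_of_poly (c k l) * V (\<sigma> l) j)) (\<nu> k) = \<omega> k j)"
        and G2: "cindep {1..kL'} {0..n} \<omega>" and G3: "\<forall>k\<in>{1..kL'}. \<forall>l\<in>{1..kL'}. k \<le> l \<longrightarrow> \<nu> k \<le> \<nu> l"
        and G4: "\<forall>k\<in>{1..kL'}. \<nu> k \<le> dn - wmin"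
        by blast
      have hpV: "has_ps \<epsilon> (fps_nth (V k' j)) (\<lambda>s. peval n (pderivv j (f k')) ((zp s)(0 := tp s)))"
        if "k' \<in> {1..kL'}" for k' j
        using PS_has_ps[OF finite_supp_pderivv[OF fin[OF that]] XH] unfolding V_def \<rho>_def .
      have sig: "\<sigma> k \<in> {1..kL'}" if "k \<in> {1..kL'}" for k using permutes_in_image[OF \<sigma>] that by simp
      show ?thesis
      proof (rule exI[of _ \<sigma>], rule conjI[OF \<sigma>], rule exI[of _ c], rule exI[of _ \<omega>], rule exI[of _ \<nu>], intro conjI G2 G3 ballI)
        fix k assume k: "k \<in> {1..kL'}"
        define E where "E = (\<lambda>j. V (\<sigma> k) j + (\<Sum>l\<in>{1..<k}. fps_of_poly (c k l) * V (\<sigma> l) j))"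
        show "\<exists>j\<in>{0..n}. \<omega> k j \<noteq> 0" using G1 k by blast
        show "\<exists>\<epsilon>''>0. \<exists>b::nat \<Rightarrow> nat \<Rightarrow> complex.
                (\<forall>j\<in>{0..n}. has_ps \<epsilon>'' (\<lambda>m. b m j)
                   (\<lambda>s. peval n (pderivv j (f (\<sigma> k))) ((zp s)(0 := tp s)) +
                        (\<Sum>l\<in>{1..<k}. poly (c k l) (complex_of_real s) *
                            peval n (pderivv j (f (\<sigma> l))) ((zp s)(0 := tp s))))) \<and>
                (\<forall>m<\<nu> k. \<forall>j\<in>{0..n}. b m j = 0) \<and>
                (\<forall>j\<in>{0..n}. b (\<nu> k) j = \<omega> k j)"
        proof (intro exI[of _ \<epsilon>] exI[of _ "\<lambda>N j. fps_nth (E j) N"] conjI h4 ballI allI impI)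
          fix j assume j: "j \<in> {0..n}"
          have "has_ps \<epsilon> (fps_nth (E j)) (\<lambda>s. peval n (pderivv j (f (\<sigma> k))) ((zp s)(0 := tp s)) +
                        (\<Sum>l\<in>{1..<k}. poly (c k l) (complex_of_real s) *
                            peval n (pderivv j (f (\<sigma> l))) ((zp s)(0 := tp s))))"
            unfolding E_def
            by (intro hp_add hpV sig k hp_sum hp_mult hp_poly) (use k in auto)
          thus "has_ps \<epsilon> (\<lambda>m. fps_nth (E j) m) (\<lambda>s. peval n (pderivv j (f (\<sigma> k))) ((zp s)(0 := tp s)) +
                        (\<Sum>l\<in>{1..<k}. poly (c k l) (complex_of_real s) *
                            peval n (pderivv j (f (\<sigma> l))) ((zp s)(0 := tp s))))" by simp
        next
          fix m j assume "m < \<nu> k" "j \<in> {0..n}"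
          thus "fps_nth (E j) m = 0" using G1 k unfolding E_def by blast
        next
          fix j assume "j \<in> {0..n}"
          thus "fps_nth (E j) (\<nu> k) = \<omega> k j" using G1 k unfolding E_def by blast
        qed
      next
        fix k assume k: "k \<in> {1..kL'}"
        have "\<nu> k \<le> dn - wmin" using G4 k by blast
        hence "real (\<nu> k) \<le> real dn - real wmin" using wmin_dn by linarith
        thus "real (\<nu> k) \<le> d - real (Min (w ` {nI+1..n}))" using d_dn unfolding wmin_def by simp
      qed
    qed
  qed
qed


end
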